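(* Let $\lambda=p_1(x)dq_1+p_2(x)dq_2$ be a toric contact form and let $x_0$ be a center of the perturbation $\lambda_{\varepsilon,L}$ (so $T_{x_0}$ is foliated by closed Reeb orbits of $\lambda$) with $W=p_1'(x_0)p_2''(x_0)-p_1''(x_0)p_2'(x_0)>0$. Let $\gamma_h$ and $\gamma_e$ be the closed Reeb orbits of $\lambda_{\varepsilon,L}$ in $T_{x_0}$ corresponding respectively to the minimum and the maximum of $f_0(q_1,q_2)=\cos(2\pi(-b_0q_1+a_0q_2))$. Then $CZ_{\tau_0}(\gamma_h)=0$ and $CZ_{\tau_0}(\gamma_e)=1$.
   Context: $Q(x)=p_1p_2'-p_2p_1'>0$; Reeb field $R=Q^{-1}(p_2'\partial_{q_1}-p_1'\partial_{q_2})$; $(a_0,b_0)$ is the primitive integer vector positively proportional to $R$ on $T_{x_0}$. The perturbation is $\lambda_{\varepsilon,L}=e^{\varepsilon F_L}\lambda$ with $F_L=\sum_i\beta_i(x)\cos(2\pi(-b_iq_1+a_iq_2))$, where the $x_i$ (centers) are the finitely many points whose fibers contain closed Reeb orbits of action $<L$, and $\beta_i$ are bump functions with $\beta_i(x)=1-(x-x_i)^2$ near $x_i$ and small disjoint supports; $\varepsilon>0$ is small. $\tau_0$ is the trivialization of $\xi$ given by $V_1=\partial_x$, $V_2=Q(x)^{-1}(p_1\partial_{q_2}-p_2\partial_{q_1})$. *)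

theory Defs
  imports "HOL-Analysis.Analysis"
begin

text \<open>Coordinates on the universal cover of T^2 x I: a point P :: real^3 has
  P$1 = x, P$2 = q1, P$3 = q2 (q1, q2 taken modulo 1).\<close>

definition smooth_on :: "(real \<Rightarrow> real) \<Rightarrow> real set \<Rightarrow> bool" where
  "smooth_on f S \<longleftrightarrow> (\<forall>k. \<forall>x\<in>S. ((deriv ^^ k) f) field_differentiable (at x))"

definition Qf :: "(real \<Rightarrow> real) \<Rightarrow> (real \<Rightarrow> real) \<Rightarrow> real \<Rightarrow> real" where
  "Qf p1 p2 x = p1 x * deriv p2 x - p2 x * deriv p1 x"

definition toric_reeb :: "(real \<Rightarrow> real) \<Rightarrow> (real \<Rightarrow> real) \<Rightarrow> real \<Rightarrow> real \<times> real" where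
  "toric_reeb p1 p2 x = (deriv p2 x / Qf p1 p2 x, - deriv p1 x / Qf p1 p2 x)"

definition toric_contact :: "(real \<Rightarrow> real) \<Rightarrow> (real \<Rightarrow> real) \<Rightarrow> real set \<Rightarrow> bool" where
  "toric_contact p1 p2 I \<longleftrightarrow> (\<exists>a b. a < b \<and> I = {a<..<b}) \<and> smooth_on p1 I \<and> smooth_on p2 I
      \<and> (\<forall>x\<in>I. Qf p1 p2 x > 0)"

text \<open>Points x whose fiber T_x contains a closed Reeb orbit of lambda of action < L.
  On T_x the Reeb flow is the linear flow q \<mapsto> q + t R(x); a closed orbit of
  period T exists iff T R(x) \<in> Z^2, and its action equals T (since lambda(R) = 1).\<close>
definition centers :: "(real \<Rightarrow> real) \<Rightarrow> (real \<Rightarrow> real) \<Rightarrow> real set \<Rightarrow> real \<Rightarrow> real set" where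
  "centers p1 p2 I L = {x\<in>I. \<exists>T. 0 < T \<and> T < L \<and>
      T * fst (toric_reeb p1 p2 x) \<in> \<int> \<and> T * snd (toric_reeb p1 p2 x) \<in> \<int>}"

definition prim_dir :: "(real \<Rightarrow> real) \<Rightarrow> (real \<Rightarrow> real) \<Rightarrow> real \<Rightarrow> int \<times> int" where
  "prim_dir p1 p2 x = (THE ab. coprime (fst ab) (snd ab) \<and>
      (\<exists>s>0. real_of_int (fst ab) = s * fst (toric_reeb p1 p2 x)
           \<and> real_of_int (snd ab) = s * snd (toric_reeb p1 p2 x)))"

definition pert_F :: "(real \<Rightarrow> real) \<Rightarrow> (real \<Rightarrow> real) \<Rightarrow> real set \<Rightarrow> (real \<Rightarrow> real \<Rightarrow> real)
     \<Rightarrow> real^3 \<Rightarrow> real" where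
  "pert_F p1 p2 C \<beta> P = (\<Sum>c\<in>C. \<beta> c (P$1) *
      cos (2 * pi * (- real_of_int (snd (prim_dir p1 p2 c)) * P$2
                     + real_of_int (fst (prim_dir p1 p2 c)) * P$3)))"

text \<open>A 1-form on (an open subset of) R^3 is given by its coefficient vector field
  (coefficients of dx, dq1, dq2).  The perturbed form lambda_eps = e^{eps F} lambda.\<close>
definition pert_form :: "(real \<Rightarrow> real) \<Rightarrow> (real \<Rightarrow> real) \<Rightarrow> real set \<Rightarrow> (real \<Rightarrow> real \<Rightarrow> real)
     \<Rightarrow> real \<Rightarrow> real^3 \<Rightarrow> real^3" where
  "pert_form p1 p2 C \<beta> \<epsilon> P = exp (\<epsilon> * pert_F p1 p2 C \<beta> P) *\<^sub>R vector [0, p1 (P$1), p2 (P$1)]"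

definition dform :: "(real^3 \<Rightarrow> real^3) \<Rightarrow> real^3 \<Rightarrow> 3 \<Rightarrow> 3 \<Rightarrow> real" where
  "dform \<alpha> P i j = frechet_derivative (\<lambda>y. \<alpha> y $ j) (at P) (axis i 1)
                   - frechet_derivative (\<lambda>y. \<alpha> y $ i) (at P) (axis j 1)"

definition reeb :: "(real^3 \<Rightarrow> real^3) \<Rightarrow> real^3 \<Rightarrow> real^3" where
  "reeb \<alpha> P = (THE R. \<alpha> P \<bullet> R = 1 \<and> (\<forall>j. (\<Sum>i\<in>UNIV. R $ i * dform \<alpha> P i j) = 0))"

text \<open>Trivialization tau_0 of xi: V1 = d/dx, V2 = Q^{-1}(p1 d/dq2 - p2 d/dq1).\<close>
definition V1 :: "real^3 \<Rightarrow> real^3" where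
  "V1 P = vector [1, 0, 0]"

definition V2 :: "(real \<Rightarrow> real) \<Rightarrow> (real \<Rightarrow> real) \<Rightarrow> real^3 \<Rightarrow> real^3" where
  "V2 p1 p2 P = (1 / Qf p1 p2 (P$1)) *\<^sub>R vector [0, - p2 (P$1), p1 (P$1)]"

text \<open>Conley--Zehnder index of a path Psi : [0,T] -> Sp(2) with Psi(0) = I
  (definition via the rotation interval, as in Hutchings' lecture notes):
  for v \<noteq> 0 let theta_v be a continuous angle of Psi(t)v; the rotation numbers
  (theta_v(T) - theta_v(0))/(2 pi) form an interval; CZ = 2k if the integer k lies
  in it, and 2k+1 if it lies in (k, k+1).\<close>
definition rot_set :: "(real \<Rightarrow> real^2^2) \<Rightarrow> real \<Rightarrow> real set" where
  "rot_set \<Psi> T = {r. \<exists>v \<theta>. v \<noteq> 0 \<and> continuous_on {0..T} \<theta> \<and>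
      (\<forall>t\<in>{0..T}. \<Psi> t *v v = norm (\<Psi> t *v v) *\<^sub>R vector [cos (\<theta> t), sin (\<theta> t)]) \<and>
      r = (\<theta> T - \<theta> 0) / (2 * pi)}"

definition CZ_path :: "(real \<Rightarrow> real^2^2) \<Rightarrow> real \<Rightarrow> int" where
  "CZ_path \<Psi> T = (if \<exists>k::int. real_of_int k \<in> rot_set \<Psi> T
      then 2 * (THE k::int. real_of_int k \<in> rot_set \<Psi> T)
      else 2 * \<lfloor>SOME r. r \<in> rot_set \<Psi> T\<rfloor> + 1)"

definition reeb_traj :: "(real^3 \<Rightarrow> real^3) \<Rightarrow> real^3 \<Rightarrow> (real \<Rightarrow> real^3) \<Rightarrow> bool" where
  "reeb_traj \<alpha> P0 \<gamma> \<longleftrightarrow> \<gamma> 0 = P0 \<and> (\<forall>t. (\<gamma> has_vector_derivative reeb \<alpha> (\<gamma> t)) (at t))"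

definition closes_at :: "(real \<Rightarrow> real^3) \<Rightarrow> real \<Rightarrow> bool" where
  "closes_at \<gamma> s \<longleftrightarrow> \<gamma> s $ 1 = \<gamma> 0 $ 1 \<and> \<gamma> s $ 2 - \<gamma> 0 $ 2 \<in> \<int> \<and> \<gamma> s $ 3 - \<gamma> 0 $ 3 \<in> \<int>"

definition min_period :: "(real \<Rightarrow> real^3) \<Rightarrow> real \<Rightarrow> bool" where
  "min_period \<gamma> T \<longleftrightarrow> 0 < T \<and> closes_at \<gamma> T \<and> (\<forall>s. 0 < s \<and> s < T \<longrightarrow> \<not> closes_at \<gamma> s)"

definition lin_sol :: "(real^3 \<Rightarrow> real^3) \<Rightarrow> (real \<Rightarrow> real^3) \<Rightarrow> real^3 \<Rightarrow> (real \<Rightarrow> real^3) \<Rightarrow> bool" where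
  "lin_sol \<alpha> \<gamma> v Y \<longleftrightarrow> Y 0 = v \<and>
     (\<forall>t. (Y has_vector_derivative frechet_derivative (reeb \<alpha>) (at (\<gamma> t)) (Y t)) (at t))"

text \<open>Psi(t) is the matrix of the linearized flow d phi_t : xi_{gamma(0)} -> xi_{gamma(t)}
  in the bases (W1, W2).\<close>
definition lin_matrix :: "(real^3 \<Rightarrow> real^3) \<Rightarrow> (real^3 \<Rightarrow> real^3) \<Rightarrow> (real \<Rightarrow> real^3)
     \<Rightarrow> (real \<Rightarrow> real^3) \<Rightarrow> (real \<Rightarrow> real^3) \<Rightarrow> (real \<Rightarrow> real^2^2) \<Rightarrow> bool" where
  "lin_matrix W1 W2 \<gamma> Y1 Y2 \<Psi> \<longleftrightarrow> (\<forall>t.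
      Y1 t = (\<Psi> t $ 1 $ 1) *\<^sub>R W1 (\<gamma> t) + (\<Psi> t $ 2 $ 1) *\<^sub>R W2 (\<gamma> t) \<and>
      Y2 t = (\<Psi> t $ 1 $ 2) *\<^sub>R W1 (\<gamma> t) + (\<Psi> t $ 2 $ 2) *\<^sub>R W2 (\<gamma> t))"

definition CZ_orbit_is :: "(real^3 \<Rightarrow> real^3) \<Rightarrow> (real^3 \<Rightarrow> real^3) \<Rightarrow> (real^3 \<Rightarrow> real^3)
     \<Rightarrow> real^3 \<Rightarrow> int \<Rightarrow> bool" where
  "CZ_orbit_is \<alpha> W1 W2 P0 k \<longleftrightarrow>
     (\<exists>\<gamma> T Y1 Y2 \<Psi>. reeb_traj \<alpha> P0 \<gamma> \<and> min_period \<gamma> T \<and>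
        lin_sol \<alpha> \<gamma> (W1 P0) Y1 \<and> lin_sol \<alpha> \<gamma> (W2 P0) Y2 \<and> lin_matrix W1 W2 \<gamma> Y1 Y2 \<Psi>) \<and>
     (\<forall>\<gamma> T Y1 Y2 \<Psi>. reeb_traj \<alpha> P0 \<gamma> \<and> min_period \<gamma> T \<and>
        lin_sol \<alpha> \<gamma> (W1 P0) Y1 \<and> lin_sol \<alpha> \<gamma> (W2 P0) Y2 \<and> lin_matrix W1 W2 \<gamma> Y1 Y2 \<Psi>
        \<longrightarrow> CZ_path \<Psi> T = k)"

end

theory Submission imports Defs begin
lemma hd_nth[derivative_intros]: "((\<lambda>x::real^'n. x $ i) has_derivative (\<lambda>h. h $ i)) (at x within s)"
  by (rule bounded_linear_imp_has_derivative[OF bounded_linear_vec_nth])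
lemma hd_cos[derivative_intros]: "((g::'a::real_normed_vector\<Rightarrow>real) has_derivative g') (at x within s) \<Longrightarrow>
   ((\<lambda>x. cos (g x)) has_derivative (\<lambda>h. g' h * (- sin (g x)))) (at x within s)"
  using DERIV_compose_FDERIV[of cos "- sin (g x)" g x g' s] DERIV_cos by simp
lemma hd_sin[derivative_intros]: "((g::'a::real_normed_vector\<Rightarrow>real) has_derivative g') (at x within s) \<Longrightarrow>
   ((\<lambda>x. sin (g x)) has_derivative (\<lambda>h. g' h * cos (g x))) (at x within s)"
  using DERIV_compose_FDERIV[of sin "cos (g x)" g x g' s] DERIV_sin by simp
lemma hd_fun1: "DERIV (f::real\<Rightarrow>real) (x$1) :> d \<Longrightarrow> ((\<lambda>y::real^3. f (y$1)) has_derivative (\<lambda>h. h$1 * d)) (at x within s)"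
  using DERIV_compose_FDERIV[of f d "\<lambda>y. y$1" x "\<lambda>h. h$1" s] hd_nth by blast

lemma vector3_axis: "(vector[a,b,c] :: real^3) = a *\<^sub>R axis 1 1 + b *\<^sub>R axis 2 1 + c *\<^sub>R axis 3 1"
  by (simp add: vec_eq_iff forall_3 axis_def)

lemma hd_vec3[derivative_intros]:
  "(f1 has_derivative f1') F \<Longrightarrow> (f2 has_derivative f2') F \<Longrightarrow> (f3 has_derivative f3') F \<Longrightarrow>
   ((\<lambda>x. vector[f1 x, f2 x, f3 x] :: real^3) has_derivative (\<lambda>h. vector[f1' h, f2' h, f3' h])) F"
  unfolding vector3_axis by (intro derivative_intros)

lemma open_U: "open {P::real^3. \<bar>P$1 - x0\<bar> < \<delta>}"
  by (rule open_Collect_less) (intro continuous_intros)+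

lemma reeb_alg:
  fixes E Q p1 p2 A1 A2 G R1 R2 R3 :: real
  assumes "E \<noteq> 0" "p1*A2 - p2*A1 = Q" "Q \<noteq> 0" "R2*A1 + R3*A2 = 0" "R1*A1 + R3*G = 0" "R1*A2 - R2*G = 0"
    "E*(p1*R2 + p2*R3) = 1"
  shows "R1 = G/(E*Q)" "R2 = A2/(E*Q)" "R3 = -A1/(E*Q)"
proof -
  have n: "p1*R2 + p2*R3 = 1/E" using assms(1,7) by (simp add: field_simps)
  have "R1 * Q = R1 * (p1*A2 - p2*A1)" using assms(2) by simp
  also have "\<dots> = p1*(R1*A2) - p2*(R1*A1)" by (simp add: algebra_simps)
  also have "\<dots> = p1*(R2*G) - p2*(-(R3*G))"
  proof -
    have "R1*A2 = R2*G" "R1*A1 = -(R3*G)" using assms(5,6) by (simp_all add: algebra_simps)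
    thus ?thesis by simp
  qed
  also have "\<dots> = G * (p1*R2 + p2*R3)" by (simp add: algebra_simps)
  finally have "R1 * Q = G / E" using n by simp
  thus "R1 = G/(E*Q)" using assms(1,3) by (simp add: field_simps)
  have "R2 * Q = R2 * (p1*A2 - p2*A1)" using assms(2) by simp
  also have "\<dots> = p1*(R2*A2) - p2*(R2*A1)" by (simp add: algebra_simps)
  also have "\<dots> = p1*(R2*A2) - p2*(-(R3*A2))"
  proof -
    have "R2*A1 = -(R3*A2)" using assms(4) by (simp add: algebra_simps)
    thus ?thesis by simp
  qed
  also have "\<dots> = A2 * (p1*R2 + p2*R3)" by (simp add: algebra_simps)
  finally have "R2 * Q = A2 / E" using n by simp
  thus "R2 = A2/(E*Q)" using assms(1,3) by (simp add: field_simps)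
  have "R3 * Q = R3 * (p1*A2 - p2*A1)" using assms(2) by simp
  also have "\<dots> = p1*(R3*A2) - p2*(R3*A1)" by (simp add: algebra_simps)
  also have "\<dots> = p1*(-(R2*A1)) - p2*(R3*A1)"
  proof -
    have "R3*A2 = -(R2*A1)" using assms(4) by (simp add: algebra_simps)
    thus ?thesis by simp
  qed
  also have "\<dots> = - A1 * (p1*R2 + p2*R3)" by (simp add: algebra_simps)
  finally have "R3 * Q = (-A1) / E" using n by simp
  thus "R3 = -A1/(E*Q)" using assms(1,3) by (simp add: field_simps)
qed

lemma sum3: "(\<Sum>i\<in>(UNIV::3 set). f i) = f 1 + f 2 + f 3" by (rule sum_3)

lemma gron_local:
  fixes f f' :: "real \<Rightarrow> real"
  assumes "a < t0" "t0 < b" "\<And>t. a < t \<Longrightarrow> t < b \<Longrightarrow> (f has_real_derivative f' t) (at t)"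
    "\<And>t. a < t \<Longrightarrow> t < b \<Longrightarrow> f t \<ge> 0" "\<And>t. a < t \<Longrightarrow> t < b \<Longrightarrow> \<bar>f' t\<bar> \<le> L * f t"
    "f t0 = 0" "a < t" "t < b"
  shows "f t = 0"
proof (cases "t0 \<le> t")
  case True
  have "exp (- L * t) * f t \<le> exp (- L * t0) * f t0"
  proof (rule DERIV_nonpos_imp_nonincreasing[OF True])
    fix u assume u: "t0 \<le> u" "u \<le> t"
    hence au: "a < u" "u < b" using assms by auto
    have "((\<lambda>u. exp (- L * u) * f u) has_real_derivative
        (exp (- L * u) * (- L) * f u + exp (- L * u) * f' u)) (at u)"
      by (auto intro!: derivative_eq_intros assms(3)[OF au] simp: algebra_simps)
    moreover have "exp (- L * u) * (- L) * f u + exp (- L * u) * f' u \<le> 0"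
    proof -
      have "f' u - L * f u \<le> 0" using assms(5)[OF au] by linarith
      hence "exp (- L * u) * (f' u - L * f u) \<le> 0" by (simp add: mult_nonneg_nonpos)
      thus ?thesis by (simp add: algebra_simps)
    qed
    ultimately show "\<exists>y. ((\<lambda>u. exp (- L * u) * f u) has_real_derivative y) (at u) \<and> y \<le> 0" by blast
  qed
  hence "exp (- L * t) * f t \<le> 0" using assms(6) by simp
  hence "f t \<le> 0" by (simp add: mult_le_0_iff)
  thus ?thesis using assms(4)[OF assms(7,8)] by simp
next
  case False
  hence F: "t \<le> t0" by simp
  have "exp (L * t) * f t \<le> exp (L * t0) * f t0"
  proof (rule DERIV_nonneg_imp_nondecreasing[OF F])
    fix u assume u: "t \<le> u" "u \<le> t0"
    hence au: "a < u" "u < b" using assms by auto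
    have "((\<lambda>u. exp (L * u) * f u) has_real_derivative
        (exp (L * u) * L * f u + exp (L * u) * f' u)) (at u)"
      by (auto intro!: derivative_eq_intros assms(3)[OF au] simp: algebra_simps)
    moreover have "exp (L * u) * L * f u + exp (L * u) * f' u \<ge> 0"
    proof -
      have "f' u + L * f u \<ge> 0" using assms(5)[OF au] by linarith
      hence "exp (L * u) * (f' u + L * f u) \<ge> 0" by simp
      thus ?thesis by (simp add: algebra_simps)
    qed
    ultimately show "\<exists>y. ((\<lambda>u. exp (L * u) * f u) has_real_derivative y) (at u) \<and> y \<ge> 0" by blast
  qed
  hence "exp (L * t) * f t \<le> 0" using assms(6) by simp
  hence "f t \<le> 0" by (simp add: mult_le_0_iff)
  thus ?thesis using assms(4)[OF assms(7,8)] by simp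
qed

lemma gron_global:
  fixes f f' :: "real \<Rightarrow> real"
  assumes "\<And>t. (f has_real_derivative f' t) (at t)" "\<And>t. f t \<ge> 0" "\<And>t. \<bar>f' t\<bar> \<le> L * f t"
    "f 0 = 0"
  shows "f t = 0"
  by (rule gron_local[of "-\<bar>t\<bar> - 1" 0 "\<bar>t\<bar> + 1" f f' L]) (use assms in auto)

lemma hvd_inner_self:
  fixes z :: "real \<Rightarrow> 'a::real_inner"
  assumes "(z has_vector_derivative v) (at t)"
  shows "((\<lambda>t. z t \<bullet> z t) has_real_derivative (2 * (z t \<bullet> v))) (at t)"
proof -
  have "((\<lambda>t. z t \<bullet> z t) has_derivative (\<lambda>h. z t \<bullet> (h *\<^sub>R v) + (h *\<^sub>R v) \<bullet> z t)) (at t)"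
    using assms unfolding has_vector_derivative_def by (intro derivative_intros)
  moreover have "(\<lambda>h. z t \<bullet> (h *\<^sub>R v) + (h *\<^sub>R v) \<bullet> z t) = (*) (2 * (z t \<bullet> v))"
    by (auto simp: fun_eq_iff inner_commute algebra_simps)
  ultimately show ?thesis unfolding has_field_derivative_def by simp
qed

lemma comp_deriv:
  "(Y has_vector_derivative D) (at t) \<Longrightarrow> ((\<lambda>t. Y t $ i) has_real_derivative D $ i) (at t)"
  unfolding has_vector_derivative_def has_field_derivative_def
  by (drule bounded_linear.has_derivative[OF bounded_linear_vec_nth, of _ _ _ i]) (simp add: mult_commute_abs)

lemma ode2_unique:
  fixes x y xs ys :: "real \<Rightarrow> real"
  assumes "\<And>t. (x has_real_derivative (ca * y t)) (at t)" "\<And>t. (y has_real_derivative (cb * x t)) (at t)"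
    "\<And>t. (xs has_real_derivative (ca * ys t)) (at t)" "\<And>t. (ys has_real_derivative (cb * xs t)) (at t)"
    "x 0 = xs 0" "y 0 = ys 0"
  shows "x t = xs t \<and> y t = ys t"
proof -
  define f where "f t = (x t - xs t)^2 + (y t - ys t)^2" for t
  define f' where "f' t = 2 * (x t - xs t) * (ca * (y t - ys t)) + 2 * (y t - ys t) * (cb * (x t - xs t))" for t
  have "f t = 0"
  proof (rule gron_global[of f f' "\<bar>ca\<bar> + \<bar>cb\<bar>"])
    show "(f has_real_derivative f' t) (at t)" for t
      unfolding f_def[abs_def] f'_def
      by (rule derivative_eq_intros assms(1-4) refl)+ (simp add: algebra_simps)
    show "0 \<le> f t" for t unfolding f_def by simp
    show "\<bar>f' t\<bar> \<le> (\<bar>ca\<bar> + \<bar>cb\<bar>) * f t" for t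
    proof -
      define a b where "a = x t - xs t" "b = y t - ys t"
      have "\<bar>2*a*b\<bar> \<le> a^2 + b^2"
      proof -
        have "0 \<le> (a - b)^2" "0 \<le> (a + b)^2" by simp_all
        thus ?thesis by (simp add: abs_le_iff power2_eq_square algebra_simps)
      qed
      hence "\<bar>ca * (2*a*b)\<bar> \<le> \<bar>ca\<bar> * (a^2+b^2)" "\<bar>cb * (2*a*b)\<bar> \<le> \<bar>cb\<bar> * (a^2+b^2)"
        by (simp_all add: abs_mult mult_left_mono)
      moreover have "f' t = ca * (2*a*b) + cb * (2*a*b)" unfolding f'_def a_b_def by (simp add: algebra_simps)
      moreover have "f t = a^2 + b^2" unfolding f_def a_b_def by simp
      ultimately show ?thesis by (simp add: algebra_simps) (smt (verit))
    qed
    show "f 0 = 0" unfolding f_def using assms(5,6) by simp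
  qed
  thus ?thesis unfolding f_def by (simp add: add_nonneg_eq_0_iff)
qed

lemma solve23:
  fixes w2 w3 X b0 a0 p1 p2 s :: real
  assumes "-b0*w2 + a0*w3 = X" "p1*w2 + p2*w3 = 0" "b0*p2 + a0*p1 = s" "s \<noteq> 0"
  shows "w2 = -p2*X/s" "w3 = p1*X/s"
proof -
  have "w2 * s = b0*p2*w2 + a0*(p1*w2)" using assms(3) by (simp add: algebra_simps flip: assms(3))
  also have "\<dots> = b0*p2*w2 + a0*(-(p2*w3))"
  proof -
    have "p1*w2 = -(p2*w3)" using assms(2) by linarith
    thus ?thesis by simp
  qed
  also have "\<dots> = -p2*X" using assms(1) by (simp add: algebra_simps flip: assms(1))
  finally show "w2 = -p2*X/s" using assms(4) by (simp add: field_simps)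
  have "w3 * s = b0*(p2*w3) + a0*p1*w3" using assms(3) by (simp add: algebra_simps flip: assms(3))
  also have "\<dots> = b0*(-(p1*w2)) + a0*p1*w3"
  proof -
    have "p2*w3 = -(p1*w2)" using assms(2) by linarith
    thus ?thesis by simp
  qed
  also have "\<dots> = p1*X" using assms(1) by (simp add: algebra_simps flip: assms(1))
  finally show "w3 = p1*X/s" using assms(4) by (simp add: field_simps)
qed

lemma int_coprime:
  fixes u :: real and ia ib :: int
  assumes "coprime ia ib" "u * of_int ia \<in> \<int>" "u * of_int ib \<in> \<int>"
  shows "u \<in> \<int>"
proof -
  obtain m n where mn: "m * ia + n * ib = gcd ia ib" using bezout_int by blast
  hence "m * ia + n * ib = 1" using assms(1) by (simp add: coprime_iff_gcd_eq_1)
  hence "u = of_int m * (u * of_int ia) + of_int n * (u * of_int ib)"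
    by (metis (mono_tags, opaque_lifting) distrib_left mult.commute mult.left_commute mult_1_right of_int_1 of_int_add of_int_mult)
  thus ?thesis using assms(2,3) by (metis Ints_add Ints_mult Ints_of_int)
qed

lemma prim_unique:
  fixes a b a' b' :: int
  assumes "coprime a b" "coprime a' b'" "s > 0" "s' > 0"
    "real_of_int a = s * r1" "real_of_int b = s * r2" "real_of_int a' = s' * r1" "real_of_int b' = s' * r2"
  shows "a = a' \<and> b = b'"
proof -
  have "real_of_int (a * b') = real_of_int (a' * b)" using assms(3-) by (simp add: algebra_simps)
  hence e: "a * b' = a' * b" by linarith
  have "a dvd a' * b" by (metis e dvd_triv_left)
  hence d1: "a dvd a'" using assms(1) by (meson coprime_dvd_mult_left_iff)
  have "a' dvd a * b'" by (metis e dvd_triv_left)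
  hence d2: "a' dvd a" using assms(2) by (meson coprime_dvd_mult_left_iff)
  have "b dvd a * b'" by (metis e dvd_triv_right)
  hence d3: "b dvd b'" using assms(1) by (metis coprime_commute coprime_dvd_mult_right_iff)
  have "b' dvd a' * b" by (metis e dvd_triv_right)
  hence d4: "b' dvd b" using assms(2) by (metis coprime_commute coprime_dvd_mult_right_iff)
  have A: "\<bar>a\<bar> = \<bar>a'\<bar>" using d1 d2 zdvd_antisym_abs by blast
  have B: "\<bar>b\<bar> = \<bar>b'\<bar>" using d3 d4 zdvd_antisym_abs by blast
  have "a = a'"
  proof -
    have "a = a' \<or> a = - a'" using A by (metis abs_eq_iff)
    moreover have "a = - a' \<Longrightarrow> r1 = 0"
    proof -
      assume "a = - a'"
      hence "s * r1 = - (s' * r1)" using assms(5,7) by (metis of_int_minus)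
      hence "(s + s') * r1 = 0" by (simp add: algebra_simps)
      thus "r1 = 0" using assms(3,4) by simp
    qed
    ultimately show ?thesis using assms(5,7) by auto
  qed
  moreover have "b = b'"
  proof -
    have "b = b' \<or> b = - b'" using B by (metis abs_eq_iff)
    moreover have "b = - b' \<Longrightarrow> r2 = 0"
    proof -
      assume "b = - b'"
      hence "s * r2 = - (s' * r2)" using assms(6,8) by (metis of_int_minus)
      hence "(s + s') * r2 = 0" by (simp add: algebra_simps)
      thus "r2 = 0" using assms(3,4) by simp
    qed
    ultimately show ?thesis using assms(6,8) by auto
  qed
  ultimately show ?thesis by simp
qed

lemma prim_exists:
  assumes "T > 0" "T * r1 \<in> \<int>" "T * r2 \<in> \<int>" "r1 \<noteq> 0 \<or> r2 \<noteq> 0"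
  shows "\<exists>ab::int\<times>int. coprime (fst ab) (snd ab) \<and> (\<exists>s>0. real_of_int (fst ab) = s * r1 \<and> real_of_int (snd ab) = s * r2)"
proof -
  obtain m where m: "T * r1 = of_int m" using assms(2) Ints_cases by blast
  obtain n where n: "T * r2 = of_int n" using assms(3) Ints_cases by blast
  have mn: "m \<noteq> 0 \<or> n \<noteq> 0" using m n assms(1,4) by auto
  define d where "d = gcd m n"
  have dpos: "d > 0" using mn d_def by simp
  have cop: "coprime (m div d) (n div d)" using mn d_def by (simp add: div_gcd_coprime)
  have "real_of_int (m div d) = real_of_int m / real_of_int d"
    by (simp add: d_def real_of_int_div)
  hence e1: "real_of_int (m div d) = (T / d) * r1" using m by simp
  have "real_of_int (n div d) = real_of_int n / real_of_int d"
    by (simp add: d_def real_of_int_div)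
  hence e2: "real_of_int (n div d) = (T / d) * r2" using n by simp
  have "T / d > 0" using assms(1) dpos by simp
  thus ?thesis using cop e1 e2 by (intro exI[of _ "(m div d, n div d)"]) auto
qed

lemma prim_the:
  assumes "T > 0" "T * r1 \<in> \<int>" "T * r2 \<in> \<int>" "r1 \<noteq> 0 \<or> r2 \<noteq> 0"
  defines "ab \<equiv> (THE ab::int\<times>int. coprime (fst ab) (snd ab) \<and> (\<exists>s>0. real_of_int (fst ab) = s * r1 \<and> real_of_int (snd ab) = s * r2))"
  shows "coprime (fst ab) (snd ab) \<and> (\<exists>s>0. real_of_int (fst ab) = s * r1 \<and> real_of_int (snd ab) = s * r2)"
  unfolding ab_def
proof (rule theI')
  show "\<exists>!ab::int\<times>int. coprime (fst ab) (snd ab) \<and> (\<exists>s>0. real_of_int (fst ab) = s * r1 \<and> real_of_int (snd ab) = s * r2)"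
  proof (rule ex_ex1I)
    show "\<exists>ab::int\<times>int. coprime (fst ab) (snd ab) \<and> (\<exists>s>0. real_of_int (fst ab) = s * r1 \<and> real_of_int (snd ab) = s * r2)"
      using prim_exists[OF assms(1-4)] .
  next
    fix x y :: "int\<times>int"
    assume "coprime (fst x) (snd x) \<and> (\<exists>s>0. real_of_int (fst x) = s * r1 \<and> real_of_int (snd x) = s * r2)"
       "coprime (fst y) (snd y) \<and> (\<exists>s>0. real_of_int (fst y) = s * r1 \<and> real_of_int (snd y) = s * r2)"
    thus "x = y" using prim_unique by (metis prod.expand)
  qed
qed

lemma vec2_eq: "(v::'a^2) = w \<longleftrightarrow> v$1 = w$1 \<and> v$2 = w$2"
  by (simp add: vec_eq_iff forall_2)

lemma mv2: "((M::real^2^2) *v (v::real^2)) = vector[M$1$1 * v$1 + M$1$2 * v$2, M$2$1 * v$1 + M$2$2 * v$2]"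
  by (simp add: vec2_eq matrix_vector_mult_def sum_2)

lemma norm2: "norm (v::real^2) = sqrt((v$1)^2 + (v$2)^2)"
  by (simp add: norm_vec_def L2_set_def sum_2)

lemma lift_exists:
  fixes u :: "real \<Rightarrow> real^2"
  assumes "continuous_on {0..T} u" "\<forall>t\<in>{0..T}. u t \<noteq> 0"
  shows "\<exists>\<theta>. continuous_on {0..T} \<theta> \<and> (\<forall>t\<in>{0..T}. u t = norm (u t) *\<^sub>R vector[cos(\<theta> t), sin(\<theta> t)])"
proof -
  define f where "f t = complex_of_real (u t $ 1) + \<i> * complex_of_real (u t $ 2)" for t
  have cf: "continuous_on {0..T} f" unfolding f_def
    by (intro continuous_intros continuous_on_compose2[OF continuous_on_of_real]
         continuous_on_compose2[OF bounded_linear_vec_nth[THEN linear_continuous_on]] assms(1)) auto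
  have nz: "\<And>t. t \<in> {0..T} \<Longrightarrow> f t \<noteq> 0"
  proof
    fix t assume t: "t \<in> {0..T}" and "f t = 0"
    hence "u t $ 1 = 0" "u t $ 2 = 0" unfolding f_def by (auto simp: complex_eq_iff)
    hence "u t = 0" by (simp add: vec2_eq)
    thus False using assms(2) t by auto
  qed
  obtain g where g: "continuous_on {0..T} g" "\<And>t. t \<in> {0..T} \<Longrightarrow> f t = exp (g t)"
    using continuous_logarithm_on_simply_connected[OF cf convex_imp_simply_connected[OF convex_real_interval(5)]
          convex_imp_locally_path_connected[OF convex_real_interval(5)] nz] by blast
  define \<theta> where "\<theta> t = Im (g t)" for t
  have "continuous_on {0..T} \<theta>" unfolding \<theta>_def by (intro continuous_intros g(1))
  moreover have "\<forall>t\<in>{0..T}. u t = norm (u t) *\<^sub>R vector[cos(\<theta> t), sin(\<theta> t)]"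
  proof
    fix t assume t: "t \<in> {0..T}"
    have e1: "u t $ 1 = exp (Re (g t)) * cos (\<theta> t)"
      using arg_cong[OF g(2)[OF t], of Re] unfolding f_def \<theta>_def by (simp add: Re_exp)
    have e2: "u t $ 2 = exp (Re (g t)) * sin (\<theta> t)"
      using arg_cong[OF g(2)[OF t], of Im] unfolding f_def \<theta>_def by (simp add: Im_exp)
    have "(exp (Re (g t)) * cos (\<theta> t))^2 + (exp (Re (g t)) * sin (\<theta> t))^2
       = (exp (Re (g t)))^2 * ((cos (\<theta> t))^2 + (sin (\<theta> t))^2)"
      by (simp only: power_mult_distrib distrib_left)
    also have "\<dots> = (exp (Re (g t)))^2" by (simp only: sin_cos_squared_add2 mult_1_right)
    finally have "norm (u t) = sqrt ((exp (Re (g t)))^2)" unfolding norm2 e1 e2 by simp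
    hence "norm (u t) = exp (Re (g t))" by simp
    thus "u t = norm (u t) *\<^sub>R vector[cos(\<theta> t), sin(\<theta> t)]" by (simp add: vec2_eq e1 e2)
  qed
  ultimately show ?thesis by blast
qed

lemma vector2_axis: "(vector[a,b] :: real^2) = a *\<^sub>R axis 1 1 + b *\<^sub>R axis 2 1"
  by (simp add: vec2_eq axis_def)

lemma cont_vec2: "continuous_on S f \<Longrightarrow> continuous_on S g \<Longrightarrow>
    continuous_on S (\<lambda>t. vector[f t, g t] :: real^2)"
  unfolding vector2_axis by (intro continuous_intros)

lemma kpos: "k > 0 \<Longrightarrow> a^2 + b^2 > (0::real) \<Longrightarrow> k * a^2 + b^2 / k > 0"
proof (cases "a = 0")
  case True
  assume "k > 0" "a^2 + b^2 > 0" thus ?thesis using True by simp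
next
  case False
  assume k: "k > 0"
  have "k * a^2 > 0" using k False by simp
  moreover have "b^2 / k \<ge> 0" using k by simp
  ultimately show ?thesis by linarith
qed

lemma alg1: "(k::real) \<noteq> 0 \<Longrightarrow> (c^2+s^2) * v1 = c*(c* v1 - s/k* v2) + s/k*(k* s* v1 + c* v2)"
  by (simp add: field_simps power2_eq_square)
lemma alg2: "(k::real) \<noteq> 0 \<Longrightarrow> (c^2+s^2) * v2 = k * s*(-(c* v1 - s/k* v2)) + c*(k* s* v1 + c* v2)"
  by (simp add: field_simps power2_eq_square)

lemma ell_rot:
  fixes \<Psi> :: "real \<Rightarrow> real^2^2"
  assumes kp: "k > 0" and wp: "\<omega> > 0" and Tp: "T > 0" and wT: "\<omega> * T < 2 * pi"
    and Psi: "\<And>t. \<Psi> t $1$1 = cos (\<omega> * t) \<and> \<Psi> t $1$2 = - sin (\<omega> * t) / k \<and>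
              \<Psi> t $2$1 = k * sin (\<omega> * t) \<and> \<Psi> t $2$2 = cos (\<omega> * t)"
  shows "CZ_path \<Psi> T = 1"
proof -
  have mv: "\<Psi> t *v v = vector[cos (\<omega>*t) * v$1 - sin (\<omega>*t) / k * v$2, k * sin (\<omega>*t) * v$1 + cos (\<omega>*t) * v$2]"
    for t v using Psi[of t] by (simp add: mv2)
  have ne: "rot_set \<Psi> T \<noteq> {}"
  proof -
    define v :: "real^2" where "v = vector[1,0]"
    have u: "\<Psi> t *v v = vector[cos (\<omega>*t), k * sin (\<omega>*t)]" for t
      unfolding mv v_def by simp
    have "continuous_on {0..T} (\<lambda>t. \<Psi> t *v v)" unfolding u
      by (intro cont_vec2 continuous_intros)
    moreover have "\<forall>t\<in>{0..T}. \<Psi> t *v v \<noteq> 0"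
    proof (intro ballI notI)
      fix t assume "\<Psi> t *v v = 0"
      hence "cos (\<omega>*t) = 0" "k * sin (\<omega>*t) = 0" unfolding u by (auto simp: vec2_eq)
      thus False using kp sin_cos_squared_add[of "\<omega>*t"] by simp
    qed
    ultimately obtain \<theta> where "continuous_on {0..T} \<theta>"
      "\<forall>t\<in>{0..T}. \<Psi> t *v v = norm (\<Psi> t *v v) *\<^sub>R vector[cos(\<theta> t), sin(\<theta> t)]"
      using lift_exists by blast
    moreover have "v \<noteq> 0" unfolding v_def by (simp add: vec2_eq)
    ultimately have "(\<theta> T - \<theta> 0) / (2 * pi) \<in> rot_set \<Psi> T" unfolding rot_set_def by blast
    thus ?thesis by blast
  qed
  have inside: "r \<in> {0<..<1}" if r: "r \<in> rot_set \<Psi> T" for r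
  proof -
    obtain v \<theta> where v: "v \<noteq> 0" and ct: "continuous_on {0..T} \<theta>"
      and lift: "\<forall>t\<in>{0..T}. \<Psi> t *v v = norm (\<Psi> t *v v) *\<^sub>R vector [cos (\<theta> t), sin (\<theta> t)]"
      and rdef: "r = (\<theta> T - \<theta> 0) / (2 * pi)"
      using r unfolding rot_set_def by blast
    define v1 v2 where "v1 = v$1" "v2 = v$2"
    have "v1 \<noteq> 0 \<or> v2 \<noteq> 0" using v unfolding v1_v2_def by (auto simp: vec2_eq)
    hence vnz: "v1^2 + v2^2 > 0" by (simp add: sum_power2_gt_zero_iff)
    have P0: "\<Psi> 0 *v v = v" unfolding mv by (simp add: vec2_eq)
    define n0 where "n0 = norm v"
    have n0p: "n0 > 0" using v unfolding n0_def by simp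
    have l0: "v1 = n0 * cos (\<theta> 0)" "v2 = n0 * sin (\<theta> 0)"
      using lift[rule_format, of 0] Tp P0 unfolding v1_v2_def n0_def by (auto simp: vec2_eq)
    have geo: "v1 * (k * sin (\<omega>*t) * v1 + cos (\<omega>*t) * v2) - v2 * (cos (\<omega>*t) * v1 - sin (\<omega>*t) / k * v2)
              = n0 * norm (\<Psi> t *v v) * sin (\<theta> t - \<theta> 0) \<and>
             v1 * (cos (\<omega>*t) * v1 - sin (\<omega>*t) / k * v2) + v2 * (k * sin (\<omega>*t) * v1 + cos (\<omega>*t) * v2)
              = n0 * norm (\<Psi> t *v v) * cos (\<theta> t - \<theta> 0)"
      if t: "t \<in> {0..T}" for t
    proof -
      have a: "cos (\<omega>*t) * v1 - sin (\<omega>*t) / k * v2 = norm (\<Psi> t *v v) * cos (\<theta> t)"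
        "k * sin (\<omega>*t) * v1 + cos (\<omega>*t) * v2 = norm (\<Psi> t *v v) * sin (\<theta> t)"
        using lift[rule_format, OF t] unfolding mv v1_v2_def by (auto simp: vec2_eq)
      define N where "N = norm (\<Psi> t *v v)"
      have b1: "v1 * (k * sin (\<omega>*t) * v1 + cos (\<omega>*t) * v2) - v2 * (cos (\<omega>*t) * v1 - sin (\<omega>*t) / k * v2)
          = v1 * (N * sin (\<theta> t)) - v2 * (N * cos (\<theta> t))" unfolding N_def a by simp
      have b2: "v1 * (cos (\<omega>*t) * v1 - sin (\<omega>*t) / k * v2) + v2 * (k * sin (\<omega>*t) * v1 + cos (\<omega>*t) * v2)
          = v1 * (N * cos (\<theta> t)) + v2 * (N * sin (\<theta> t))" unfolding N_def a by simp
      show ?thesis unfolding b1 b2 N_def[symmetric] unfolding l0 sin_diff cos_diff by (simp add: algebra_simps)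
    qed
    have nPp: "norm (\<Psi> t *v v) > 0" for t
    proof -
      have "\<Psi> t *v v \<noteq> 0"
      proof
        assume "\<Psi> t *v v = 0"
        hence "cos (\<omega>*t) * v1 - sin (\<omega>*t) / k * v2 = 0" "k * sin (\<omega>*t) * v1 + cos (\<omega>*t) * v2 = 0"
          unfolding mv v1_v2_def by (auto simp: vec2_eq)
        note E = this
        have "((cos (\<omega>*t))^2 + (sin (\<omega>*t))^2) * v1 = cos (\<omega>*t) * (cos (\<omega>*t) * v1 - sin (\<omega>*t) / k * v2) + sin (\<omega>*t) / k * (k * sin (\<omega>*t) * v1 + cos (\<omega>*t) * v2)"
          using kp by (rule_tac alg1) simp
        hence "v1 = 0" using E by simp
        moreover have "((cos (\<omega>*t))^2 + (sin (\<omega>*t))^2) * v2 = k * sin (\<omega>*t) * (- (cos (\<omega>*t) * v1 - sin (\<omega>*t) / k * v2)) + cos (\<omega>*t) * (k * sin (\<omega>*t) * v1 + cos (\<omega>*t) * v2)"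
          using kp by (rule_tac alg2) simp
        hence "v2 = 0" using E by simp
        ultimately show False using vnz by simp
      qed
      thus ?thesis by simp
    qed
    define \<Delta> where "\<Delta> t = \<theta> t - \<theta> 0" for t
    have cD: "continuous_on {0..T} \<Delta>" unfolding \<Delta>_def by (intro continuous_intros ct)
    have noret: "\<Delta> \<tau> \<noteq> 2 * pi * of_int m" if tau: "0 < \<tau>" "\<tau> \<le> T" for \<tau> m
    proof
      assume D: "\<Delta> \<tau> = 2 * pi * of_int m"
      have sD: "sin (\<Delta> \<tau>) = 0" and cD1: "cos (\<Delta> \<tau>) = 1" unfolding D
        by (metis mult.commute sin_int_2pin, metis mult.commute cos_int_2pin)
      have tin: "\<tau> \<in> {0..T}" using tau by auto
      note g = geo[OF tin, unfolded \<Delta>_def[symmetric]]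
      have sw: "sin (\<omega> * \<tau>) * (k * v1^2 + v2^2 / k) = 0"
        using g sD kp by (simp add: algebra_simps power2_eq_square)
      have "k * v1^2 + v2^2 / k > 0" using kpos[OF kp vnz] .
      hence s0: "sin (\<omega> * \<tau>) = 0" using sw by simp
      hence "(cos (\<omega> * \<tau>))^2 = 1" using sin_cos_squared_add[of "\<omega> * \<tau>"] by simp
      hence "cos (\<omega> * \<tau>) = 1 \<or> cos (\<omega> * \<tau>) = -1" by (simp add: power2_eq_1_iff)
      moreover have "cos (\<omega> * \<tau>) \<noteq> 1"
      proof
        assume "cos (\<omega> * \<tau>) = 1"
        then obtain n :: int where n: "\<omega> * \<tau> = n * 2 * pi" by (auto simp: cos_one_2pi_int)
        have "0 < \<omega> * \<tau>" using wp tau by simp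
        moreover have "\<omega> * \<tau> < 2 * pi" using wT tau wp by (meson le_less_trans mult_left_mono less_eq_real_def)
        ultimately have "0 < (\<omega>*\<tau>)/(2*pi)" "(\<omega>*\<tau>)/(2*pi) < 1" by auto
        moreover have "real_of_int n = (\<omega>*\<tau>)/(2*pi)" using n by (simp add: field_simps)
        ultimately have "0 < real_of_int n" "real_of_int n < 1" by presburger+
        hence "0 < n" "n < 1" by simp_all
        thus False by linarith
      qed
      ultimately have "cos (\<omega> * \<tau>) = -1" by blast
      hence "- (v1^2 + v2^2) = n0 * norm (\<Psi> \<tau> *v v)" using g s0 cD1 by (simp add: algebra_simps power2_eq_square)
      moreover have "n0 * norm (\<Psi> \<tau> *v v) > 0" using n0p nPp by simp
      ultimately show False using vnz by linarith
    qed
    obtain d where d: "d > 0" "\<forall>t\<in>{0..T}. dist t 0 < d \<longrightarrow> dist (\<Delta> t) (\<Delta> 0) < pi"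
      using cD Tp unfolding continuous_on_iff by (metis atLeastAtMost_iff less_eq_real_def pi_gt_zero)
    define \<tau>3 where "\<tau>3 = min T (min (pi / (2*\<omega>)) (d/2))"
    have a: "\<tau>3 \<le> pi / (2*\<omega>)" "\<tau>3 \<le> d/2" "\<tau>3 \<le> T" unfolding \<tau>3_def by auto
    have "0 < pi / (2*\<omega>)" using wp by simp
    hence t30: "0 < \<tau>3" unfolding \<tau>3_def using Tp d by simp
    have "\<omega> * \<tau>3 \<le> \<omega> * (pi / (2*\<omega>))" using a(1) wp by (intro mult_left_mono) auto
    hence "\<omega> * \<tau>3 \<le> pi / 2" using wp by simp
    hence "\<omega> * \<tau>3 < pi" using pi_gt_zero by linarith
    hence t3: "0 < \<tau>3" "\<tau>3 \<le> T" "\<tau>3 < d" "\<omega> * \<tau>3 < pi" using a d t30 pi_gt_zero by auto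
    have "sin (\<omega> * \<tau>3) > 0" using t3 wp by (intro sin_gt_zero) auto
    hence "sin (\<omega> * \<tau>3) * (k * v1^2 + v2^2 / k) > 0" using kpos[OF kp vnz] by simp
    hence "n0 * norm (\<Psi> \<tau>3 *v v) * sin (\<Delta> \<tau>3) > 0"
      using geo[of \<tau>3] t3 kp unfolding \<Delta>_def[symmetric] by (auto simp: algebra_simps power2_eq_square)
    moreover have "n0 * norm (\<Psi> \<tau>3 *v v) > 0" using n0p nPp[of \<tau>3] by simp
    ultimately have sD3: "sin (\<Delta> \<tau>3) > 0" by (simp add: zero_less_mult_iff)
    have aD3: "\<bar>\<Delta> \<tau>3\<bar> < pi" using d(2)[rule_format, of \<tau>3] t3 by (auto simp: dist_real_def \<Delta>_def)
    have D3: "0 < \<Delta> \<tau>3"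
    proof (rule ccontr)
      assume "\<not> 0 < \<Delta> \<tau>3"
      hence "sin (- \<Delta> \<tau>3) \<ge> 0" using aD3 by (intro sin_ge_zero) auto
      thus False using sD3 by simp
    qed
    have cD3: "continuous_on {\<tau>3..T} \<Delta>" using continuous_on_subset[OF cD] t3 by auto
    have "0 < \<Delta> T"
    proof (rule ccontr)
      assume "\<not> 0 < \<Delta> T"
      then obtain \<tau> where "\<tau>3 \<le> \<tau>" "\<tau> \<le> T" "\<Delta> \<tau> = 0"
        using IVT2'[of \<Delta> T 0 \<tau>3, OF _ _ t3(2) cD3] D3 by force
      thus False using noret[of \<tau> 0] t3 by simp
    qed
    moreover have "\<Delta> T < 2 * pi"
    proof (rule ccontr)
      assume "\<not> \<Delta> T < 2 * pi"
      then obtain \<tau> where "\<tau>3 \<le> \<tau>" "\<tau> \<le> T" "\<Delta> \<tau> = 2 * pi"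
        using IVT'[of \<Delta> \<tau>3 "2*pi" T, OF _ _ t3(2) cD3] aD3 by force
      thus False using noret[of \<tau> 1] t3 by simp
    qed
    ultimately show ?thesis unfolding rdef \<Delta>_def by (auto simp: field_simps)
  qed
  have noint: "\<not> (\<exists>k::int. real_of_int k \<in> rot_set \<Psi> T)"
  proof
    assume "\<exists>k::int. real_of_int k \<in> rot_set \<Psi> T"
    then obtain k :: int where "real_of_int k \<in> {0<..<1}" using inside by blast
    hence "0 < k" "k < 1" by auto
    thus False by linarith
  qed
  have "(SOME r. r \<in> rot_set \<Psi> T) \<in> rot_set \<Psi> T" using ne by (simp add: some_in_eq)
  hence "(SOME r. r \<in> rot_set \<Psi> T) \<in> {0<..<1}" using inside by blast
  hence "\<lfloor>SOME r. r \<in> rot_set \<Psi> T\<rfloor> = 0" by (simp add: floor_eq_iff)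
  thus ?thesis unfolding CZ_path_def using noint by simp
qed


lemma hyp_alg: "(c::real) > \<bar>s\<bar> \<Longrightarrow> w1^2 + w2^2 > 0 \<Longrightarrow> l > 0 \<Longrightarrow>
   c * w1 + s * w2 = - l * w1 \<Longrightarrow> s * w1 + c * w2 = - l * w2 \<Longrightarrow> False"
proof -
  assume a: "c > \<bar>s\<bar>" "w1^2 + w2^2 > 0" "l > 0" "c * w1 + s * w2 = - l * w1" "s * w1 + c * w2 = - l * w2"
  have "w1 * (c * w1 + s * w2) + w2 * (s * w1 + c * w2) = - l * (w1^2 + w2^2)"
    using a(4,5) by (simp add: algebra_simps power2_eq_square)
  moreover have "w1 * (c * w1 + s * w2) + w2 * (s * w1 + c * w2) = c * (w1^2+w2^2) + s * (2*w1*w2)"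
    by (simp add: algebra_simps power2_eq_square)
  moreover have "\<bar>s * (2*w1*w2)\<bar> \<le> \<bar>s\<bar> * (w1^2+w2^2)"
  proof -
    have "0 \<le> (w1 - w2)^2" "0 \<le> (w1 + w2)^2" by simp_all
    hence "\<bar>2*w1*w2\<bar> \<le> w1^2+w2^2" by (simp add: abs_le_iff power2_eq_square algebra_simps)
    thus ?thesis by (simp add: abs_mult mult_left_mono)
  qed
  moreover have "\<bar>s\<bar> * (w1^2+w2^2) < c * (w1^2+w2^2)" using a(1,2) by simp
  moreover have "l * (w1^2 + w2^2) > 0" using a(2,3) by simp
  ultimately show False by linarith
qed

lemma hyp_inv: "(c::real)^2 - s^2 = 1 \<Longrightarrow> c * a + s * b = 0 \<Longrightarrow> s * a + c * b = 0 \<Longrightarrow> a = 0 \<and> b = 0"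
proof -
  assume h: "c^2 - s^2 = 1" "c * a + s * b = 0" "s * a + c * b = 0"
  have "a = (c^2 - s^2) * a" using h(1) by simp
  also have "\<dots> = c * (c * a + s * b) - s * (s * a + c * b)" by (simp add: algebra_simps power2_eq_square)
  finally have A: "a = 0" using h by simp
  have "b = (c^2 - s^2) * b" using h(1) by simp
  also have "\<dots> = c * (s * a + c * b) - s * (c * a + s * b)" by (simp add: algebra_simps power2_eq_square)
  finally have "b = 0" using h by simp
  thus ?thesis using A by simp
qed

lemma abs_sinh_lt_cosh: "\<bar>sinh (x::real)\<bar> < cosh x"
  using sinh_less_cosh_real[of x] sinh_less_cosh_real[of "-x"] by (simp add: abs_less_iff)

lemma hyp_rot:
  fixes \<Psi> :: "real \<Rightarrow> real^2^2"
  assumes kp: "k > 0" and Tp: "T > 0"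
    and Psi: "\<And>t. \<Psi> t $1$1 = cosh (\<omega> * t) \<and> \<Psi> t $1$2 = sinh (\<omega> * t) / k \<and>
              \<Psi> t $2$1 = k * sinh (\<omega> * t) \<and> \<Psi> t $2$2 = cosh (\<omega> * t)"
  shows "CZ_path \<Psi> T = 0"
proof -
  have mv: "\<Psi> t *v v = vector[cosh (\<omega>*t) * v$1 + sinh (\<omega>*t) / k * v$2, k * sinh (\<omega>*t) * v$1 + cosh (\<omega>*t) * v$2]"
    for t v using Psi[of t] by (simp add: mv2)
  have zero_in: "0 \<in> rot_set \<Psi> T"
  proof -
    define v :: "real^2" where "v = vector[1,k]"
    have u: "\<Psi> t *v v = exp (\<omega>*t) *\<^sub>R v" for t
    proof -
      have "cosh (\<omega>*t) + sinh (\<omega>*t) = exp (\<omega>*t)" by (rule cosh_plus_sinh)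
      thus ?thesis unfolding mv v_def using kp by (simp add: vec2_eq algebra_simps flip: distrib_left)
    qed
    have nv: "norm v = sqrt (1 + k^2)" unfolding v_def norm2 by simp
    have vv: "v = sqrt (1 + k^2) *\<^sub>R vector [cos (arctan k), sin (arctan k)]"
    proof -
      have "1 + k^2 > 0" by (simp add: add_pos_nonneg)
      hence "sqrt (1 + k^2) > 0" by simp
      thus ?thesis unfolding v_def by (simp add: vec2_eq cos_arctan sin_arctan)
    qed
    have "\<forall>t\<in>{0..T}. \<Psi> t *v v = norm (\<Psi> t *v v) *\<^sub>R vector [cos ((\<lambda>_. arctan k) t), sin ((\<lambda>_. arctan k) t)]"
    proof
      fix t
      have "norm (\<Psi> t *v v) = exp (\<omega>*t) * sqrt (1 + k^2)" unfolding u nv[symmetric] by simp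
      thus "\<Psi> t *v v = norm (\<Psi> t *v v) *\<^sub>R vector [cos ((\<lambda>_. arctan k) t), sin ((\<lambda>_. arctan k) t)]"
        unfolding u by (subst (1) vv) simp
    qed
    moreover have "v \<noteq> 0" unfolding v_def by (simp add: vec2_eq)
    moreover have "continuous_on {0..T} (\<lambda>_::real. arctan k)" by simp
    ultimately have "((\<lambda>_. arctan k) T - (\<lambda>_. arctan k) 0) / (2 * pi) \<in> rot_set \<Psi> T"
      unfolding rot_set_def by blast
    thus ?thesis by simp
  qed
  have inside: "\<bar>r\<bar> < 1/2" if r: "r \<in> rot_set \<Psi> T" for r
  proof -
    obtain v \<theta> where v: "v \<noteq> 0" and ct: "continuous_on {0..T} \<theta>"
      and lift: "\<forall>t\<in>{0..T}. \<Psi> t *v v = norm (\<Psi> t *v v) *\<^sub>R vector [cos (\<theta> t), sin (\<theta> t)]"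
      and rdef: "r = (\<theta> T - \<theta> 0) / (2 * pi)"
      using r unfolding rot_set_def by blast
    define v1 v2 where "v1 = v$1" "v2 = v$2"
    have "v1 \<noteq> 0 \<or> v2 \<noteq> 0" using v unfolding v1_v2_def by (auto simp: vec2_eq)
    hence vnz0: "v1 \<noteq> 0 \<or> v2 / k \<noteq> 0" using kp by auto
    hence vnz: "v1^2 + (v2/k)^2 > 0" by (simp add: sum_power2_gt_zero_iff)
    have P0: "\<Psi> 0 *v v = v" unfolding mv by (simp add: vec2_eq)
    define n0 where "n0 = norm v"
    have n0p: "n0 > 0" using v unfolding n0_def by simp
    have l0: "v1 = n0 * cos (\<theta> 0)" "v2 = n0 * sin (\<theta> 0)"
      using lift[rule_format, of 0] Tp P0 unfolding v1_v2_def n0_def by (auto simp: vec2_eq)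
    define \<Delta> where "\<Delta> t = \<theta> t - \<theta> 0" for t
    have cD: "continuous_on {0..T} \<Delta>" unfolding \<Delta>_def by (intro continuous_intros ct)
    have nohalf: False if tau: "0 \<le> \<tau>" "\<tau> \<le> T" and sD: "sin (\<Delta> \<tau>) = 0" and cD1: "cos (\<Delta> \<tau>) = -1" for \<tau>
    proof -
      have tin: "\<tau> \<in> {0..T}" using tau by auto
      define N where "N = norm (\<Psi> \<tau> *v v)"
      define c s where "c = cosh (\<omega>*\<tau>)" "s = sinh (\<omega>*\<tau>)"
      have a: "c * v1 + s / k * v2 = N * cos (\<theta> \<tau>)"
        "k * s * v1 + c * v2 = N * sin (\<theta> \<tau>)"
        using lift[rule_format, OF tin] unfolding mv v1_v2_def N_def c_s_def by (auto simp: vec2_eq)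
      have th: "\<theta> \<tau> = \<theta> 0 + \<Delta> \<tau>" unfolding \<Delta>_def by simp
      have c1: "cos (\<theta> \<tau>) = - cos (\<theta> 0)" "sin (\<theta> \<tau>) = - sin (\<theta> 0)"
        unfolding th cos_add sin_add sD cD1 by simp_all
      have hp: "c^2 - s^2 = 1" unfolding c_s_def by (rule hyperbolic_pythagoras)
      have Np: "N > 0" unfolding N_def
      proof -
        have "\<Psi> \<tau> *v v \<noteq> 0"
        proof
          assume z: "\<Psi> \<tau> *v v = 0"
          hence "c * v1 + s / k * v2 = 0" "k * s * v1 + c * v2 = 0"
            unfolding mv c_s_def v1_v2_def by (auto simp: vec2_eq)
          hence "c * v1 + s * (v2/k) = 0" "s * v1 + c * (v2/k) = 0" using kp by (auto simp: field_simps)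
          hence "v1 = 0 \<and> v2/k = 0" using hyp_inv[OF hp] by blast
          thus False using vnz0 by blast
        qed
        thus "norm (\<Psi> \<tau> *v v) > 0" by simp
      qed
      have e1: "c * v1 + s * (v2/k) = - (N/n0) * v1"
        using a(1) c1 l0 n0p by (simp add: field_simps)
      have e2: "s * v1 + c * (v2/k) = - (N/n0) * (v2/k)"
      proof -
        have "k * s * v1 + c * v2 = - (N/n0) * v2" using a(2) c1 l0 n0p by (simp add: field_simps)
        thus ?thesis using kp by (simp add: field_simps)
      qed
      show False using hyp_alg[of s c v1 "v2/k" "N/n0", OF _ vnz _ e1 e2] abs_sinh_lt_cosh Np n0p
        unfolding c_s_def by simp
    qed
    have "\<Delta> T < pi"
    proof (rule ccontr)
      assume "\<not> \<Delta> T < pi"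
      then obtain \<tau> where "0 \<le> \<tau>" "\<tau> \<le> T" "\<Delta> \<tau> = pi"
        using IVT'[of \<Delta> 0 pi T, OF _ _ _ cD] Tp unfolding \<Delta>_def by force
      thus False using nohalf[of \<tau>] by simp
    qed
    moreover have "\<Delta> T > - pi"
    proof (rule ccontr)
      assume "\<not> \<Delta> T > - pi"
      then obtain \<tau> where "0 \<le> \<tau>" "\<tau> \<le> T" "\<Delta> \<tau> = - pi"
        using IVT2'[of \<Delta> T "- pi" 0, OF _ _ _ cD] Tp unfolding \<Delta>_def by force
      thus False using nohalf[of \<tau>] by simp
    qed
    ultimately show ?thesis unfolding rdef \<Delta>_def by (auto simp: field_simps abs_less_iff)
  qed
  have ex: "\<exists>k::int. real_of_int k \<in> rot_set \<Psi> T" using zero_in by (metis of_int_0)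
  have "(THE k::int. real_of_int k \<in> rot_set \<Psi> T) = 0"
  proof (rule the_equality)
    show "real_of_int 0 \<in> rot_set \<Psi> T" using zero_in by simp
  next
    fix k :: int assume "real_of_int k \<in> rot_set \<Psi> T"
    hence "\<bar>real_of_int k\<bar> < 1/2" using inside by blast
    thus "k = 0" by linarith
  qed
  thus ?thesis unfolding CZ_path_def using ex by simp
qed


locale orb =
  fixes p1 p2 :: "real \<Rightarrow> real" and x0 a0 b0 s e \<delta> :: real and \<alpha> :: "real^3 \<Rightarrow> real^3"
  assumes dp: "\<delta> > 0"
  and Qpos: "\<And>x. \<bar>x - x0\<bar> < \<delta> \<Longrightarrow> Qf p1 p2 x > 0"
  and d1: "\<And>x. \<bar>x - x0\<bar> < \<delta> \<Longrightarrow> DERIV p1 x :> deriv p1 x"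
  and d2: "\<And>x. \<bar>x - x0\<bar> < \<delta> \<Longrightarrow> DERIV p2 x :> deriv p2 x"
  and dd1: "DERIV (deriv p1) x0 :> deriv (deriv p1) x0"
  and dd2: "DERIV (deriv p2) x0 :> deriv (deriv p2) x0"
  and alpha: "\<And>P. \<bar>P$1 - x0\<bar> < \<delta> \<Longrightarrow> \<alpha> P = exp (e * ((1 - (P$1 - x0)^2) * cos (2*pi*(-b0*P$2 + a0*P$3))))
       *\<^sub>R vector[0, p1 (P$1), p2 (P$1)]"
  and sp: "s > 0" and a0: "a0 = s * (deriv p2 x0 / Qf p1 p2 x0)"
  and b0: "b0 = s * (- deriv p1 x0 / Qf p1 p2 x0)"
begin

definition th :: "real^3 \<Rightarrow> real" where "th P = -b0*P$2 + a0*P$3"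
definition F0 :: "real^3 \<Rightarrow> real" where "F0 P = (1 - (P$1 - x0)^2) * cos (2*pi*th P)"
definition gx :: "real^3 \<Rightarrow> real" where "gx P = e * (-2*(P$1 - x0)) * cos (2*pi*th P)"
definition gt :: "real^3 \<Rightarrow> real" where "gt P = e * (1 - (P$1 - x0)^2) * (-(2*pi) * sin (2*pi*th P))"
definition Rf :: "real^3 \<Rightarrow> real^3" where
  "Rf P = (exp (-(e * F0 P)) / Qf p1 p2 (P$1)) *\<^sub>R vector[gt P * (b0 * p2 (P$1) + a0 * p1 (P$1)),
      gx P * p2 (P$1) + deriv p2 (P$1), -(gx P * p1 (P$1) + deriv p1 (P$1))]"

abbreviation "U \<equiv> {P::real^3. \<bar>P$1 - x0\<bar> < \<delta>}"

lemma alpha': "P \<in> U \<Longrightarrow> \<alpha> P = exp (e * F0 P) *\<^sub>R vector[0, p1 (P$1), p2 (P$1)]"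
  using alpha unfolding F0_def th_def by simp

lemma dth: "(th has_derivative (\<lambda>h. -b0*h$2 + a0*h$3)) (at P)"
  unfolding th_def by (auto intro!: derivative_eq_intros)

lemma dF0raw: "(F0 has_derivative (\<lambda>h. (-2*(P$1 - x0)) * cos (2*pi*th P) * h$1 +
     (1 - (P$1 - x0)^2) * (-(2*pi) * sin (2*pi*th P)) * (-b0*h$2 + a0*h$3))) (at P)"
  unfolding F0_def
  apply (rule derivative_eq_intros dth refl)+
  apply (simp add: fun_eq_iff algebra_simps th_def)
  done

lemma dF0: "((\<lambda>y. e * F0 y) has_derivative (\<lambda>h. gx P * h$1 + gt P * (-b0*h$2 + a0*h$3))) (at P)"
  unfolding F0_def gx_def gt_def
  apply (rule derivative_eq_intros dth refl)+
  apply (simp add: fun_eq_iff algebra_simps th_def)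
  done


lemma dal2: "P \<in> U \<Longrightarrow> ((\<lambda>y. \<alpha> y $ 2) has_derivative
   (\<lambda>h. exp (e*F0 P) * ((gx P * h$1 + gt P*(-b0*h$2 + a0*h$3)) * p1 (P$1) + h$1 * deriv p1 (P$1)))) (at P)"
proof -
  assume P: "P \<in> U"
  have "((\<lambda>y. exp (e * F0 y) * p1 (y$1)) has_derivative
   (\<lambda>h. exp (e*F0 P) * ((gx P * h$1 + gt P*(-b0*h$2 + a0*h$3)) * p1 (P$1) + h$1 * deriv p1 (P$1)))) (at P)"
    apply (rule derivative_eq_intros dF0raw hd_fun1[of p1, OF d1] refl)+
    using P apply simp
    apply (simp add: fun_eq_iff algebra_simps gx_def gt_def)
    done
  thus ?thesis by (rule has_derivative_transform_within_open[OF _ open_U P]) (simp add: alpha')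
qed

lemma dal3: "P \<in> U \<Longrightarrow> ((\<lambda>y. \<alpha> y $ 3) has_derivative
   (\<lambda>h. exp (e*F0 P) * ((gx P * h$1 + gt P*(-b0*h$2 + a0*h$3)) * p2 (P$1) + h$1 * deriv p2 (P$1)))) (at P)"
proof -
  assume P: "P \<in> U"
  have "((\<lambda>y. exp (e * F0 y) * p2 (y$1)) has_derivative
   (\<lambda>h. exp (e*F0 P) * ((gx P * h$1 + gt P*(-b0*h$2 + a0*h$3)) * p2 (P$1) + h$1 * deriv p2 (P$1)))) (at P)"
    apply (rule derivative_eq_intros dF0raw hd_fun1[of p2, OF d2] refl)+
    using P apply simp
    apply (simp add: fun_eq_iff algebra_simps gx_def gt_def)
    done
  thus ?thesis by (rule has_derivative_transform_within_open[OF _ open_U P]) (simp add: alpha')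
qed

lemma dal1: "P \<in> U \<Longrightarrow> ((\<lambda>y. \<alpha> y $ 1) has_derivative (\<lambda>h. 0)) (at P)"
proof -
  assume P: "P \<in> U"
  have "((\<lambda>y. 0::real) has_derivative (\<lambda>h. 0)) (at P)" by simp
  thus ?thesis by (rule has_derivative_transform_within_open[OF _ open_U P]) (simp add: alpha')
qed

lemma dform_U:
  assumes P: "P \<in> U"
  defines "E \<equiv> exp (e * F0 P)"
  defines "A1 \<equiv> gx P * p1 (P$1) + deriv p1 (P$1)" and "A2 \<equiv> gx P * p2 (P$1) + deriv p2 (P$1)"
    and "G \<equiv> gt P * (b0 * p2 (P$1) + a0 * p1 (P$1))"
  shows "dform \<alpha> P 1 1 = 0" "dform \<alpha> P 2 2 = 0" "dform \<alpha> P 3 3 = 0"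
    "dform \<alpha> P 1 2 = E * A1" "dform \<alpha> P 2 1 = - E * A1"
    "dform \<alpha> P 1 3 = E * A2" "dform \<alpha> P 3 1 = - E * A2"
    "dform \<alpha> P 3 2 = E * G" "dform \<alpha> P 2 3 = - E * G"
  unfolding dform_def E_def A1_def A2_def G_def
  unfolding frechet_derivative_at[OF dal1[OF P], symmetric] frechet_derivative_at[OF dal2[OF P], symmetric]
    frechet_derivative_at[OF dal3[OF P], symmetric]
  by (auto simp: axis_def algebra_simps)

lemma reeb_U: assumes P: "P \<in> U" shows "reeb \<alpha> P = Rf P"
proof -
  define E where "E = exp (e * F0 P)"
  define A1 where "A1 = gx P * p1 (P$1) + deriv p1 (P$1)"
  define A2 where "A2 = gx P * p2 (P$1) + deriv p2 (P$1)"
  define G where "G = gt P * (b0 * p2 (P$1) + a0 * p1 (P$1))"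
  define Q where "Q = Qf p1 p2 (P$1)"
  have Qp: "Q > 0" using Qpos P unfolding Q_def by simp
  have Ep: "E > 0" unfolding E_def by simp
  have QA: "p1 (P$1)*A2 - p2 (P$1)*A1 = Q" unfolding A1_def A2_def Q_def Qf_def by (simp add: algebra_simps)
  have Rf': "Rf P = vector [G/(E*Q), A2/(E*Q), -A1/(E*Q)]"
    unfolding Rf_def E_def Q_def G_def A1_def A2_def by (simp add: vec_eq_iff forall_3 exp_minus field_simps)
  note df = dform_U[OF P, folded E_def A1_def A2_def G_def]
  have al: "\<alpha> P = vector [0, p1 (P$1), p2 (P$1)] * 0 + E *\<^sub>R vector [0, p1 (P$1), p2 (P$1)]"
    unfolding E_def using alpha'[OF P] by simp
  have cond: "(\<alpha> P \<bullet> R = 1 \<and> (\<forall>j. (\<Sum>i\<in>UNIV. R $ i * dform \<alpha> P i j) = 0)) \<longleftrightarrow>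
     E*(p1 (P$1)*R$2 + p2 (P$1)*R$3) = 1 \<and> - E*(R$2*A1 + R$3*A2) = 0 \<and> E*(R$1*A1 + R$3*G) = 0 \<and> E*(R$1*A2 - R$2*G) = 0" for R
    unfolding al forall_3 sum3 df by (simp add: inner_vec_def sum3 algebra_simps)
  show ?thesis unfolding reeb_def
  proof (rule the_equality)
    show "\<alpha> P \<bullet> Rf P = 1 \<and> (\<forall>j. (\<Sum>i\<in>UNIV. Rf P $ i * dform \<alpha> P i j) = 0)"
    proof -
      have "p1 (P$1)*(A2/(E*Q)) + p2 (P$1)*(-A1/(E*Q)) = (p1 (P$1)*A2 - p2 (P$1)*A1)/(E*Q)"
        by (simp add: diff_divide_distrib)
      also have "\<dots> = 1/E" unfolding QA using Qp Ep by simp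
      finally have 1: "E*(p1 (P$1)*(A2/(E*Q)) + p2 (P$1)*(-A1/(E*Q))) = 1" using Ep by simp
      show ?thesis unfolding cond Rf' using 1 Ep Qp by (simp add: field_simps)
    qed
  next
    fix R assume "\<alpha> P \<bullet> R = 1 \<and> (\<forall>j. (\<Sum>i\<in>UNIV. R $ i * dform \<alpha> P i j) = 0)"
    hence c: "E*(p1 (P$1)*R$2 + p2 (P$1)*R$3) = 1" "R$2*A1 + R$3*A2 = 0" "R$1*A1 + R$3*G = 0" "R$1*A2 - R$2*G = 0"
      unfolding cond using Ep by auto
    show "R = Rf P" unfolding Rf' using reeb_alg[OF _ QA _ c(2,3,4,1)] Ep Qp
      by (simp add: vec_eq_iff forall_3)
  qed
qed


definition Q0 where "Q0 = Qf p1 p2 x0"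
definition Q' where "Q' = p1 x0 * deriv (deriv p2) x0 - p2 x0 * deriv (deriv p1) x0"

lemma dQ: "DERIV (Qf p1 p2) x0 :> Q'"
proof -
  have "((\<lambda>x. p1 x * deriv p2 x - p2 x * deriv p1 x) has_real_derivative
     (deriv p1 x0 * deriv p2 x0 + p1 x0 * deriv (deriv p2) x0 - (deriv p2 x0 * deriv p1 x0 + p2 x0 * deriv (deriv p1) x0))) (at x0)"
  proof -
    have a: "DERIV p1 x0 :> deriv p1 x0" "DERIV p2 x0 :> deriv p2 x0" using d1 d2 dp by auto
    show ?thesis by (rule derivative_eq_intros a dd1 dd2 refl)+ (simp add: algebra_simps)
  qed
  thus ?thesis unfolding Qf_def[abs_def] Q'_def by (simp add: algebra_simps)
qed

definition M :: "real \<Rightarrow> real^3 \<Rightarrow> real^3" where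
  "M \<sigma> h = (exp (-(e*\<sigma>))/Q0) *\<^sub>R vector[e*(-4*pi^2*\<sigma>)*(-b0*h$2 + a0*h$3)*(b0*p2 x0 + a0*p1 x0),
      (deriv (deriv p2) x0 - 2*e*\<sigma>*p2 x0)*h$1, -((deriv (deriv p1) x0 - 2*e*\<sigma>*p1 x0)*h$1)]
    + (-(exp (-(e*\<sigma>)) * Q' * h$1 / Q0^2)) *\<^sub>R vector[0, deriv p2 x0, -deriv p1 x0]"

lemma Q0pos: "Q0 > 0" unfolding Q0_def using Qpos[of x0] dp by simp

lemma dRf:
  assumes P1: "P$1 = x0" and sP: "sin (2*pi*th P) = 0" and cP: "cos (2*pi*th P) = \<sigma>"
  shows "(Rf has_derivative M \<sigma>) (at P)"
proof -
  have x0U: "\<bar>x0 - x0\<bar> < \<delta>" using dp by simp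
  have Qn: "Qf p1 p2 (P$1) \<noteq> 0" using Q0pos unfolding Q0_def P1 by simp
  have hp1: "((\<lambda>y. p1 (y$1)) has_derivative (\<lambda>h. h$1 * deriv p1 x0)) (at P)"
    using hd_fun1[where f=p1 and x=P, OF d1[OF x0U, folded P1]] unfolding P1 .
  have hp2: "((\<lambda>y. p2 (y$1)) has_derivative (\<lambda>h. h$1 * deriv p2 x0)) (at P)"
    using hd_fun1[where f=p2 and x=P, OF d2[OF x0U, folded P1]] unfolding P1 .
  have hdp1: "((\<lambda>y. deriv p1 (y$1)) has_derivative (\<lambda>h. h$1 * deriv (deriv p1) x0)) (at P)"
    using hd_fun1[where f="deriv p1" and x=P, OF dd1[folded P1]] unfolding P1 .
  have hdp2: "((\<lambda>y. deriv p2 (y$1)) has_derivative (\<lambda>h. h$1 * deriv (deriv p2) x0)) (at P)"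
    using hd_fun1[where f="deriv p2" and x=P, OF dd2[folded P1]] unfolding P1 .
  have hQ: "((\<lambda>y. Qf p1 p2 (y$1)) has_derivative (\<lambda>h. h$1 * Q')) (at P)"
    using hd_fun1[where f="Qf p1 p2" and x=P, OF dQ[folded P1]] unfolding P1 .
  show ?thesis
    unfolding Rf_def gt_def gx_def
    apply (rule derivative_eq_intros dF0raw dth hp1 hp2 hdp1 hdp2 hQ refl Qn)+
    apply (unfold F0_def sP cP P1)
    apply (simp add: fun_eq_iff vec_eq_iff forall_3 M_def Q0_def field_simps power2_eq_square)
    done
qed


lemma th_add: "th (y + z) = th y + th z" unfolding th_def by (simp add: algebra_simps)
lemma th_scale: "th (c *\<^sub>R y) = c * th y" unfolding th_def by (simp add: algebra_simps)

lemma Rf_inv: "y$1 = z$1 \<Longrightarrow> th y = th z \<Longrightarrow> Rf y = Rf z"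
  unfolding Rf_def F0_def gx_def gt_def by simp

lemma loc_lip:
  fixes F :: "real^3 \<Rightarrow> real^3"
  assumes "(F has_derivative F') (at P)"
  shows "\<exists>\<rho>>0. \<exists>L\<ge>0. \<forall>z::real^3. norm z < \<rho> \<longrightarrow> norm (F (P + z) - F P) \<le> L * norm z"
proof -
  have bl: "bounded_linear F'" using assms by (rule has_derivative_bounded_linear)
  obtain K where K: "\<And>x. norm (F' x) \<le> norm x * K" "K > 0" using bounded_linear.pos_bounded[OF bl] by blast
  obtain d where d: "d > 0" "\<And>x'. 0 < norm (x' - P) \<Longrightarrow> norm (x' - P) < d \<Longrightarrow>
      norm (F x' - F P - F' (x' - P)) / norm (x' - P) < 1"
    using assms unfolding has_derivative_at' by (meson zero_less_one)
  have "\<forall>z::real^3. norm z < d \<longrightarrow> norm (F (P + z) - F P) \<le> (K + 1) * norm z"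
  proof (intro allI impI)
    fix z :: "real^3" assume z: "norm z < d"
    show "norm (F (P + z) - F P) \<le> (K + 1) * norm z"
    proof (cases "z = 0")
      case True thus ?thesis by simp
    next
      case False
      hence "norm (F (P + z) - F P - F' z) / norm z < 1" using d(2)[of "P + z"] z by simp
      hence a: "norm (F (P + z) - F P - F' z) \<le> norm z" using False by (simp add: divide_less_eq)
      have "norm (F (P + z) - F P) \<le> norm (F (P + z) - F P - F' z) + norm (F' z)"
        using norm_triangle_ineq[of "F (P + z) - F P - F' z" "F' z"] by simp
      also have "\<dots> \<le> norm z + norm z * K" using a K(1)[of z] by linarith
      finally show ?thesis by (simp add: algebra_simps)
    qed
  qed
  moreover have "K + 1 \<ge> 0" using K by simp
  ultimately show ?thesis using d(1) by blast
qed

end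

locale orbit = orb +
  fixes q1 q2 \<sigma> :: real
  assumes sig: "sin (2*pi*(-b0*q1 + a0*q2)) = 0" "cos (2*pi*(-b0*q1 + a0*q2)) = \<sigma>"
begin

definition P0 :: "real^3" where "P0 = vector[x0, q1, q2]"
definition r :: "real^3" where "r = Rf P0"
definition ell :: "real \<Rightarrow> real^3" where "ell t = P0 + t *\<^sub>R r"

lemma thP0: "th P0 = -b0*q1 + a0*q2" unfolding th_def P0_def by simp

lemma p2a0: "deriv p2 x0 = a0 * Q0 / s" using a0 sp Q0pos unfolding Q0_def by (simp add: field_simps)
lemma p1b0: "deriv p1 x0 = - b0 * Q0 / s" using b0 sp Q0pos unfolding Q0_def by (simp add: field_simps)

lemma r_eq: "r = (exp (-(e*\<sigma>)) / s) *\<^sub>R vector[0, a0, b0]"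
  unfolding r_def Rf_def F0_def gx_def gt_def thP0[unfolded th_def] using sig Q0pos sp
  by (simp add: vec_eq_iff forall_3 P0_def p2a0 p1b0 Q0_def[symmetric] th_def)

lemma th_r: "th r = 0" unfolding r_eq th_def by (simp add: algebra_simps)
lemma r1: "r$1 = 0" unfolding r_eq by simp

lemma ell1: "ell t $ 1 = x0" unfolding ell_def P0_def by (simp add: r1)
lemma th_ell: "th (ell t) = th P0" unfolding ell_def th_add th_scale th_r by simp

lemma ellU: "ell t \<in> U" using ell1 dp by simp

lemma Rf_ell: "Rf (ell t) = r" unfolding r_def by (rule Rf_inv) (simp_all add: ell1 th_ell P0_def)

lemma reeb_ell: "reeb \<alpha> (ell t) = r" using reeb_U[OF ellU] Rf_ell by simp

lemma ell_traj: "reeb_traj \<alpha> P0 ell"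
proof -
  have "((\<lambda>t. P0 + t *\<^sub>R r) has_vector_derivative r) (at t)" for t
    by (auto intro!: derivative_eq_intros)
  hence "(ell has_vector_derivative r) (at t)" for t unfolding ell_def[abs_def] .
  moreover have "ell 0 = P0" unfolding ell_def by simp
  ultimately show ?thesis unfolding reeb_traj_def reeb_ell by simp
qed

lemma dreeb_ell: "frechet_derivative (reeb \<alpha>) (at (ell t)) = M \<sigma>"
proof -
  have "(Rf has_derivative M \<sigma>) (at (ell t))"
    by (rule dRf) (use sig in \<open>simp_all add: ell1 th_ell thP0\<close>)
  hence "(reeb \<alpha> has_derivative M \<sigma>) (at (ell t))"
    by (rule has_derivative_transform_within_open[OF _ open_U ellU]) (simp add: reeb_U)
  thus ?thesis by (simp add: frechet_derivative_at[symmetric])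
qed


lemma P0_ell: "P0 = ell 0" unfolding ell_def by simp

lemma traj_unique:
  assumes tr: "reeb_traj \<alpha> P0 \<gamma>"
  shows "\<gamma> = ell"
proof -
  have g0: "\<gamma> 0 = P0" and gd: "\<And>t. (\<gamma> has_vector_derivative reeb \<alpha> (\<gamma> t)) (at t)"
    using tr unfolding reeb_traj_def by auto
  have dP0: "(Rf has_derivative M \<sigma>) (at P0)"
    by (rule dRf) (use sig in \<open>simp_all add: P0_def th_def\<close>)
  obtain \<rho> L where rho: "\<rho> > 0" "L \<ge> 0" and lip: "\<And>z. norm z < \<rho> \<Longrightarrow> norm (Rf (P0 + z) - Rf P0) \<le> L * norm z"
    using loc_lip[OF dP0] by blast
  define z where "z t = \<gamma> t - ell t" for t
  have ed: "(ell has_vector_derivative r) (at t)" for t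
  proof -
    have "((\<lambda>t. P0 + t *\<^sub>R r) has_vector_derivative r) (at t)" by (auto intro!: derivative_eq_intros)
    thus ?thesis unfolding ell_def[abs_def] .
  qed
  have zd: "(z has_vector_derivative (reeb \<alpha> (\<gamma> t) - r)) (at t)" for t
    unfolding z_def[abs_def] by (intro derivative_intros gd ed)
  have cz: "isCont z t" for t using has_vector_derivative_continuous[OF zd] .
  have cg: "continuous_on UNIV \<gamma>"
    using has_vector_derivative_continuous[OF gd] by (intro continuous_at_imp_continuous_on) auto
  have ce: "continuous_on UNIV ell"
    using has_vector_derivative_continuous[OF ed] by (intro continuous_at_imp_continuous_on) auto
  define S where "S = {t. \<gamma> t = ell t}"
  have clS: "closed S" unfolding S_def by (rule closed_Collect_eq[OF cg ce])
  have opS: "open S" unfolding open_dist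
  proof (intro ballI)
    fix t1 assume t1: "t1 \<in> S"
    hence zt1: "z t1 = 0" unfolding S_def z_def by simp
    have "min \<rho> \<delta> > 0" using rho dp by simp
    then obtain h where h: "h > 0" "\<And>t. dist t t1 < h \<Longrightarrow> dist (z t) (z t1) < min \<rho> \<delta>"
      using cz[of t1] unfolding continuous_at_eps_delta by blast
    have small: "norm (z t) < \<rho>" "norm (z t) < \<delta>" if "t1 - h < t" "t < t1 + h" for t
      using h(2)[of t] that zt1 by (auto simp: dist_real_def dist_norm)
    have key: "reeb \<alpha> (\<gamma> t) - r = Rf (P0 + z t) - Rf P0" if "t1 - h < t" "t < t1 + h" for t
    proof -
      have gt: "\<gamma> t = ell t + z t" unfolding z_def by simp
      have "\<bar>z t $ 1\<bar> < \<delta>" using small(2)[OF that] component_le_norm_cart[of "z t" 1] by linarith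
      hence "\<gamma> t \<in> U" unfolding gt by (simp add: ell1)
      hence "reeb \<alpha> (\<gamma> t) = Rf (\<gamma> t)" by (rule reeb_U)
      also have "\<dots> = Rf (P0 + z t)"
        by (rule Rf_inv) (simp_all add: gt ell1 P0_def th_add th_ell)
      finally show ?thesis unfolding r_def by simp
    qed
    define f where "f t = z t \<bullet> z t" for t
    define f' where "f' t = 2 * (z t \<bullet> (reeb \<alpha> (\<gamma> t) - r))" for t
    have "f t = 0" if tt: "t1 - h < t" "t < t1 + h" for t
    proof (rule gron_local[of "t1 - h" t1 "t1 + h" f f' "2*L"])
      show "t1 - h < t1" "t1 < t1 + h" using h by auto
      show "(f has_real_derivative f' t) (at t)" for t
        unfolding f_def[abs_def] f'_def by (rule hvd_inner_self[OF zd])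
      show "0 \<le> f t" for t unfolding f_def by simp
      show "\<bar>f' u\<bar> \<le> 2 * L * f u" if "t1 - h < u" "u < t1 + h" for u
      proof -
        have "\<bar>f' u\<bar> = 2 * \<bar>z u \<bullet> (Rf (P0 + z u) - Rf P0)\<bar>" unfolding f'_def key[OF that] by simp
        also have "\<dots> \<le> 2 * (norm (z u) * norm (Rf (P0 + z u) - Rf P0))"
          using Cauchy_Schwarz_ineq2 by simp
        also have "\<dots> \<le> 2 * (norm (z u) * (L * norm (z u)))"
          using lip[OF small(1)[OF that]] by (simp add: mult_left_mono)
        also have "\<dots> = 2 * L * f u" unfolding f_def by (simp add: power2_norm_eq_inner[symmetric] power2_eq_square)
        finally show ?thesis .
      qed
      show "f t1 = 0" unfolding f_def zt1 by simp
    qed (use tt in auto)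
    hence "\<forall>t. dist t t1 < h \<longrightarrow> t \<in> S" unfolding f_def S_def z_def by (auto simp: dist_real_def)
    thus "\<exists>e>0. \<forall>y. dist y t1 < e \<longrightarrow> y \<in> S" using h(1) by blast
  qed
  have "0 \<in> S" unfolding S_def using g0 P0_ell by simp
  hence "S = UNIV" using clopen[of S] clS opS by auto
  thus ?thesis unfolding S_def by auto
qed


lemma s_eq: "b0 * p2 x0 + a0 * p1 x0 = s"
proof -
  define c where "c = s / Qf p1 p2 x0"
  have "a0 = c * deriv p2 x0" "b0 = - c * deriv p1 x0" unfolding a0 b0 c_def by simp_all
  hence "b0 * p2 x0 + a0 * p1 x0 = c * Qf p1 p2 x0" unfolding Qf_def by (simp add: algebra_simps)
  thus ?thesis unfolding c_def using Q0pos unfolding Q0_def by simp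
qed

definition Ac where "Ac = 4*pi^2*e*exp (-(e*\<sigma>)) * s / Q0"
definition Bc where "Bc = exp (-(e*\<sigma>)) / Q0 * ((-b0 * deriv (deriv p2) x0 - a0 * deriv (deriv p1) x0) + 2 * e * \<sigma> * s)"

lemma M1: "M \<sigma> h $ 1 = - \<sigma> * Ac * th h"
proof -
  have "M \<sigma> h $ 1 = (exp (-(e*\<sigma>))/Q0) * (e*(-4*pi^2*\<sigma>)*(-b0*h$2 + a0*h$3)*(b0*p2 x0 + a0*p1 x0))"
    by (simp add: M_def)
  thus ?thesis unfolding s_eq Ac_def th_def using Q0pos by (simp add: field_simps)
qed

lemma Mth: "th (M \<sigma> h) = Bc * h$1"
proof -
  have z: "b0 * deriv p2 x0 + a0 * deriv p1 x0 = 0" unfolding p2a0 p1b0 by (simp add: field_simps)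
  have "th (M \<sigma> h) = exp (-(e*\<sigma>))/Q0 * ((-b0 * deriv (deriv p2) x0 - a0 * deriv (deriv p1) x0) + 2*e*\<sigma>*(b0 * p2 x0 + a0 * p1 x0)) * h$1
       + exp (-(e*\<sigma>)) * Q' * h$1 / Q0^2 * (b0 * deriv p2 x0 + a0 * deriv p1 x0)"
    unfolding M_def th_def using Q0pos by (simp add: field_simps)
  thus ?thesis unfolding z s_eq Bc_def by simp
qed

lemma Mzeta: "p1 x0 * M \<sigma> h $ 2 + p2 x0 * M \<sigma> h $ 3 = 0"
proof -
  have Q0e: "Q0 = p1 x0 * deriv p2 x0 - p2 x0 * deriv p1 x0" unfolding Q0_def Qf_def by simp
  have "p1 x0 * M \<sigma> h $ 2 + p2 x0 * M \<sigma> h $ 3 = exp (-(e*\<sigma>))/Q0 * Q' * h$1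
      - exp (-(e*\<sigma>)) * Q' * h$1 / Q0^2 * (p1 x0 * deriv p2 x0 - p2 x0 * deriv p1 x0)"
    unfolding M_def Q'_def using Q0pos by (simp add: field_simps)
  thus ?thesis unfolding Q0e[symmetric] using Q0pos by (simp add: power2_eq_square)
qed

lemma lin_analysis:
  assumes "lin_sol \<alpha> ell v Y"
  shows "\<And>t. ((\<lambda>t. Y t $ 1) has_real_derivative (- \<sigma> * Ac * th (Y t))) (at t)"
    "\<And>t. ((\<lambda>t. th (Y t)) has_real_derivative (Bc * Y t $ 1)) (at t)"
    "\<And>t. p1 x0 * Y t $ 2 + p2 x0 * Y t $ 3 = p1 x0 * v $ 2 + p2 x0 * v $ 3"
    "Y 0 = v"
proof -
  have Y0: "Y 0 = v" and Yd: "\<And>t. (Y has_vector_derivative M \<sigma> (Y t)) (at t)"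
    using assms unfolding lin_sol_def dreeb_ell by auto
  show "Y 0 = v" by (rule Y0)
  show "((\<lambda>t. Y t $ 1) has_real_derivative (- \<sigma> * Ac * th (Y t))) (at t)" for t
    using comp_deriv[OF Yd[of t], of 1] unfolding M1 .
  show "((\<lambda>t. th (Y t)) has_real_derivative (Bc * Y t $ 1)) (at t)" for t
  proof -
    have "((\<lambda>t. -b0 * Y t $ 2 + a0 * Y t $ 3) has_real_derivative (-b0 * M \<sigma> (Y t) $ 2 + a0 * M \<sigma> (Y t) $ 3)) (at t)"
      by (rule derivative_eq_intros comp_deriv[OF Yd] refl)+ simp
    thus ?thesis using Mth[of "Y t"] unfolding th_def by simp
  qed
  show "p1 x0 * Y t $ 2 + p2 x0 * Y t $ 3 = p1 x0 * v $ 2 + p2 x0 * v $ 3" for t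
  proof -
    have "((\<lambda>t. p1 x0 * Y t $ 2 + p2 x0 * Y t $ 3) has_real_derivative 0) (at u)" for u
    proof -
      have "((\<lambda>t. p1 x0 * Y t $ 2 + p2 x0 * Y t $ 3) has_real_derivative (p1 x0 * M \<sigma> (Y u) $ 2 + p2 x0 * M \<sigma> (Y u) $ 3)) (at u)"
        by (rule derivative_eq_intros comp_deriv[OF Yd] refl)+ simp
      thus ?thesis unfolding Mzeta .
    qed
    hence "p1 x0 * Y t $ 2 + p2 x0 * Y t $ 3 = p1 x0 * Y 0 $ 2 + p2 x0 * Y 0 $ 3"
      using DERIV_isconst_all[where f="\<lambda>t. p1 x0 * Y t $ 2 + p2 x0 * Y t $ 3" and x=t and y=0] by blast
    thus ?thesis unfolding Y0 .
  qed
qed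


lemma Y_form:
  assumes "p1 x0 * Y $ 2 + p2 x0 * Y $ 3 = 0"
  shows "Y = vector[Y$1, -p2 x0 * th Y / s, p1 x0 * th Y / s]"
  using solve23[of b0 "Y$2" a0 "Y$3" "th Y" "p1 x0" "p2 x0" s, OF _ assms s_eq] sp
  by (simp add: vec_eq_iff forall_3 th_def)

lemma V1_ell: "V1 (ell t) = vector[1,0,0]" unfolding V1_def by simp
lemma V2_ell: "V2 p1 p2 (ell t) = (1/Q0) *\<^sub>R vector[0, -p2 x0, p1 x0]"
  unfolding V2_def ell1 Q0_def by simp
lemma V2_P0: "V2 p1 p2 P0 = (1/Q0) *\<^sub>R vector[0, -p2 x0, p1 x0]"
  using V2_ell[of 0] P0_ell by simp
lemma th_V2: "th ((1/Q0) *\<^sub>R vector[0, -p2 x0, p1 x0]) = s / Q0"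
proof -
  have "th ((1/Q0) *\<^sub>R vector[0, -p2 x0, p1 x0]) = (b0 * p2 x0 + a0 * p1 x0)/Q0"
    unfolding th_def using Q0pos by (simp add: field_simps)
  thus ?thesis by (simp add: s_eq)
qed

lemma CZ_general:
  fixes xs ys :: "real \<Rightarrow> real \<Rightarrow> real \<Rightarrow> real"
  assumes odex: "\<And>a b t. ((xs a b) has_real_derivative (-\<sigma>*Ac*ys a b t)) (at t)"
    and odey: "\<And>a b t. ((ys a b) has_real_derivative (Bc*xs a b t)) (at t)"
    and ini: "\<And>a b. xs a b 0 = a" "\<And>a b. ys a b 0 = b"
    and mp: "min_period ell T0" and mpu: "\<And>T. min_period ell T \<Longrightarrow> T = T0"
    and CZ: "\<And>\<Psi>. (\<And>t. \<Psi> t$1$1 = xs 1 0 t \<and> \<Psi> t$1$2 = xs 0 (s/Q0) t \<and>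
                \<Psi> t$2$1 = Q0/s * ys 1 0 t \<and> \<Psi> t$2$2 = Q0/s * ys 0 (s/Q0) t) \<Longrightarrow> CZ_path \<Psi> T0 = k"
  shows "CZ_orbit_is \<alpha> V1 (V2 p1 p2) P0 k"
proof -
  define Yc where "Yc a b t = (vector[xs a b t, -p2 x0 * ys a b t / s, p1 x0 * ys a b t / s] :: real^3)" for a b t
  have sne: "s \<noteq> 0" using sp by simp
  have thv: "th (vector[x, -p2 x0 * y / s, p1 x0 * y / s]) = y" for x y
  proof -
    have "th (vector[x, -p2 x0 * y / s, p1 x0 * y / s]) = (b0 * p2 x0 + a0 * p1 x0) * y / s"
      unfolding th_def using sp by (simp add: field_simps)
    thus ?thesis using sp by (simp add: s_eq)
  qed
  have thYc: "th (Yc a b t) = ys a b t" for a b t unfolding Yc_def by (rule thv)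
  have Yc_sol: "lin_sol \<alpha> ell (Yc a b 0) (Yc a b)" for a b
    unfolding lin_sol_def dreeb_ell
  proof (intro conjI allI refl)
    fix t
    have d: "(Yc a b has_vector_derivative vector[-\<sigma>*Ac*ys a b t, -p2 x0 * (Bc*xs a b t) / s, p1 x0 * (Bc*xs a b t) / s]) (at t)"
      unfolding Yc_def[abs_def] has_vector_derivative_def
      by (rule derivative_eq_intros odex[unfolded has_field_derivative_def] odey[unfolded has_field_derivative_def] refl sne)+
         (simp add: fun_eq_iff vec_eq_iff forall_3 algebra_simps)
    have z: "p1 x0 * M \<sigma> (Yc a b t) $ 2 + p2 x0 * M \<sigma> (Yc a b t) $ 3 = 0" by (rule Mzeta)
    have "M \<sigma> (Yc a b t) = vector[M \<sigma> (Yc a b t)$1, -p2 x0 * th (M \<sigma> (Yc a b t)) / s, p1 x0 * th (M \<sigma> (Yc a b t)) / s]"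
      by (rule Y_form[OF z])
    also have "\<dots> = vector[-\<sigma>*Ac*ys a b t, -p2 x0 * (Bc*xs a b t) / s, p1 x0 * (Bc*xs a b t) / s]"
      unfolding M1 Mth thYc by (simp add: Yc_def)
    finally show "(Yc a b has_vector_derivative M \<sigma> (Yc a b t)) (at t)" using d by simp
  qed
  have Yc1: "Yc 1 0 0 = V1 P0" unfolding Yc_def V1_def ini by (simp add: vec_eq_iff forall_3)
  have Yc2: "Yc 0 (s/Q0) 0 = V2 p1 p2 P0" unfolding Yc_def V2_P0 ini using sp Q0pos
    by (simp add: vec_eq_iff forall_3)
  have lm_iff: "lin_matrix V1 (V2 p1 p2) ell Y1 Y2 \<Psi> \<longleftrightarrow>
     (\<forall>t. Y1 t = \<Psi> t $1$1 *\<^sub>R vector[1,0,0] + \<Psi> t $2$1 *\<^sub>R ((1/Q0) *\<^sub>R vector[0, -p2 x0, p1 x0]) \<and>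
          Y2 t = \<Psi> t $1$2 *\<^sub>R vector[1,0,0] + \<Psi> t $2$2 *\<^sub>R ((1/Q0) *\<^sub>R vector[0, -p2 x0, p1 x0]))"
    for Y1 Y2 \<Psi> unfolding lin_matrix_def V1_ell V2_ell ..
  define \<Psi>c where "\<Psi>c t = (vector[vector[xs 1 0 t, xs 0 (s/Q0) t], vector[Q0/s * ys 1 0 t, Q0/s * ys 0 (s/Q0) t]] :: real^2^2)" for t
  have ex: "\<exists>\<gamma> T Y1 Y2 \<Psi>. reeb_traj \<alpha> P0 \<gamma> \<and> min_period \<gamma> T \<and>
        lin_sol \<alpha> \<gamma> (V1 P0) Y1 \<and> lin_sol \<alpha> \<gamma> (V2 p1 p2 P0) Y2 \<and> lin_matrix V1 (V2 p1 p2) \<gamma> Y1 Y2 \<Psi>"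
  proof (intro exI conjI)
    show "reeb_traj \<alpha> P0 ell" by (rule ell_traj)
    show "min_period ell T0" by (rule mp)
    show "lin_sol \<alpha> ell (V1 P0) (Yc 1 0)" using Yc_sol[of 1 0] unfolding Yc1 .
    show "lin_sol \<alpha> ell (V2 p1 p2 P0) (Yc 0 (s/Q0))" using Yc_sol[of 0 "s/Q0"] unfolding Yc2 .
    show "lin_matrix V1 (V2 p1 p2) ell (Yc 1 0) (Yc 0 (s/Q0)) \<Psi>c"
      unfolding lm_iff Yc_def \<Psi>c_def using sp Q0pos by (simp add: vec_eq_iff forall_3)
  qed
  have all: "CZ_path \<Psi> T = k" if H: "reeb_traj \<alpha> P0 \<gamma> \<and> min_period \<gamma> T \<and>
        lin_sol \<alpha> \<gamma> (V1 P0) Y1 \<and> lin_sol \<alpha> \<gamma> (V2 p1 p2 P0) Y2 \<and> lin_matrix V1 (V2 p1 p2) \<gamma> Y1 Y2 \<Psi>"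
    for \<gamma> T Y1 Y2 \<Psi>
  proof -
    have g: "\<gamma> = ell" using traj_unique H by blast
    have T: "T = T0" using mpu H unfolding g by blast
    have L1: "lin_sol \<alpha> ell (V1 P0) Y1" and L2: "lin_sol \<alpha> ell (V2 p1 p2 P0) Y2"
      and LM: "lin_matrix V1 (V2 p1 p2) ell Y1 Y2 \<Psi>" using H unfolding g by auto
    note A1 = lin_analysis[OF L1] and A2 = lin_analysis[OF L2]
    have v1: "V1 P0 $ 1 = 1" "th (V1 P0) = 0" "p1 x0 * V1 P0 $ 2 + p2 x0 * V1 P0 $ 3 = 0"
      unfolding V1_def th_def by simp_all
    have v2: "V2 p1 p2 P0 $ 1 = 0" "th (V2 p1 p2 P0) = s/Q0" "p1 x0 * V2 p1 p2 P0 $ 2 + p2 x0 * V2 p1 p2 P0 $ 3 = 0"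
      unfolding V2_P0 th_V2 by (simp_all add: algebra_simps)
    have s1: "Y1 t $ 1 = xs 1 0 t \<and> th (Y1 t) = ys 1 0 t" for t
      by (rule ode2_unique[where ca="-\<sigma>*Ac" and cb=Bc]) (use A1 v1 odex odey ini in auto)
    have s2: "Y2 t $ 1 = xs 0 (s/Q0) t \<and> th (Y2 t) = ys 0 (s/Q0) t" for t
      by (rule ode2_unique[where ca="-\<sigma>*Ac" and cb=Bc]) (use A2 v2 odex odey ini in auto)
    have "\<Psi> t$1$1 = xs 1 0 t \<and> \<Psi> t$1$2 = xs 0 (s/Q0) t \<and>
                \<Psi> t$2$1 = Q0/s * ys 1 0 t \<and> \<Psi> t$2$2 = Q0/s * ys 0 (s/Q0) t" for t
    proof -
      have e1: "Y1 t = \<Psi> t $1$1 *\<^sub>R vector[1,0,0] + \<Psi> t $2$1 *\<^sub>R ((1/Q0) *\<^sub>R vector[0, -p2 x0, p1 x0])"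
       and e2: "Y2 t = \<Psi> t $1$2 *\<^sub>R vector[1,0,0] + \<Psi> t $2$2 *\<^sub>R ((1/Q0) *\<^sub>R vector[0, -p2 x0, p1 x0])"
        using LM unfolding lm_iff by auto
      have "Y1 t $ 1 = \<Psi> t $1$1" "Y2 t $ 1 = \<Psi> t $1$2" unfolding e1 e2 by simp_all
      moreover have "th (Y1 t) = \<Psi> t $2$1 * (s/Q0)" "th (Y2 t) = \<Psi> t $2$2 * (s/Q0)"
        unfolding e1 e2 th_add th_scale th_V2 by (simp_all add: th_def s_eq)
      ultimately show ?thesis using s1[of t] s2[of t] sp Q0pos by (auto simp: field_simps)
    qed
    thus ?thesis unfolding T by (rule CZ)
  qed
  show ?thesis unfolding CZ_orbit_is_def using ex all by blast
qed


definition T0 where "T0 = s * exp (e*\<sigma>)"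

lemma T0pos: "T0 > 0" unfolding T0_def using sp by simp

lemma closes_ell: "closes_at ell \<tau> \<longleftrightarrow> (\<tau> * exp (-(e*\<sigma>)) / s) * a0 \<in> \<int> \<and> (\<tau> * exp (-(e*\<sigma>)) / s) * b0 \<in> \<int>"
  unfolding closes_at_def ell_def r_eq by simp

lemma mp_T0:
  assumes ints: "a0 = of_int ia" "b0 = of_int ib" "coprime ia ib"
  shows "min_period ell T0"
  unfolding min_period_def
proof (intro conjI allI impI T0pos)
  show "closes_at ell T0" unfolding closes_ell T0_def using sp ints by (simp add: exp_minus field_simps)
  fix \<tau> assume t: "0 < \<tau> \<and> \<tau> < T0"
  show "\<not> closes_at ell \<tau>"
  proof
    assume "closes_at ell \<tau>"
    hence "(\<tau> * exp (-(e*\<sigma>)) / s) * a0 \<in> \<int> \<and> (\<tau> * exp (-(e*\<sigma>)) / s) * b0 \<in> \<int>"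
      using closes_ell by blast
    hence "(\<tau> * exp (-(e*\<sigma>)) / s) * of_int ia \<in> \<int>" "(\<tau> * exp (-(e*\<sigma>)) / s) * of_int ib \<in> \<int>"
      using ints(1,2) by auto
    hence "(\<tau> * exp (-(e*\<sigma>)) / s) \<in> \<int>" using int_coprime[OF ints(3)] by blast
    moreover have "0 < \<tau> * exp (-(e*\<sigma>)) / s" using t sp by simp
    moreover have "\<tau> * exp (-(e*\<sigma>)) / s < 1"
    proof -
      have "\<tau> * exp (-(e*\<sigma>)) < T0 * exp (-(e*\<sigma>))" using t by simp
      also have "\<dots> = s" unfolding T0_def by (simp add: exp_minus)
      finally show ?thesis using sp by simp
    qed
    ultimately show False by (metis Ints_cases less_irrefl of_int_0_less_iff of_int_less_1_iff zero_less_iff_neq_zero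
        int_one_le_iff_zero_less not_le)
  qed
qed

lemma mp_unique:
  assumes ints: "a0 = of_int ia" "b0 = of_int ib" "coprime ia ib" and m: "min_period ell T"
  shows "T = T0"
proof -
  have m0: "min_period ell T0" by (rule mp_T0[OF ints])
  show ?thesis
  proof (rule ccontr)
    assume "T \<noteq> T0"
    hence "T < T0 \<or> T0 < T" by linarith
    thus False using m m0 unfolding min_period_def by blast
  qed
qed

lemma case_ell:
  assumes ints: "a0 = of_int ia" "b0 = of_int ib" "coprime ia ib"
    and sg: "\<sigma> = 1" and Ap: "Ac > 0" and Bp: "Bc > 0" and small: "sqrt (Ac*Bc) * T0 < 2*pi"
  shows "CZ_orbit_is \<alpha> V1 (V2 p1 p2) P0 1"
proof -
  define \<omega> where "\<omega> = sqrt (Ac*Bc)"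
  have wp: "\<omega> > 0" unfolding \<omega>_def using Ap Bp by simp
  have w2: "\<omega> * \<omega> = Ac * Bc" unfolding \<omega>_def using Ap Bp by (simp add: real_sqrt_mult_self)
  have Bce: "Bc = \<omega> * \<omega> / Ac" using w2 Ap by (simp add: field_simps)
  define xs where "xs a b t = a * cos (\<omega>*t) - (Ac/\<omega>) * b * sin (\<omega>*t)" for a b t
  define ys where "ys a b t = b * cos (\<omega>*t) + (\<omega>/Ac) * a * sin (\<omega>*t)" for a b t
  define k where "k = Q0 * \<omega> / (s * Ac)"
  have kp: "k > 0" unfolding k_def using Q0pos Ap sp wp by simp
  show ?thesis
  proof (rule CZ_general[where xs=xs and ys=ys])
    show "((xs a b) has_real_derivative (-\<sigma>*Ac*ys a b t)) (at t)" for a b t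
    proof -
      have "((xs a b) has_real_derivative (- a * \<omega> * sin (\<omega>*t) - Ac * b * cos (\<omega>*t))) (at t)"
        unfolding xs_def[abs_def] by (rule derivative_eq_intros refl)+ (use wp in \<open>simp add: field_simps\<close>)
      moreover have "- a * \<omega> * sin (\<omega>*t) - Ac * b * cos (\<omega>*t) = -Ac*ys a b t"
        unfolding ys_def using Ap wp by (simp add: field_simps)
      moreover have e: "-\<sigma>*Ac*ys a b t = -Ac*ys a b t" using sg by simp
      ultimately show ?thesis unfolding e by simp
    qed
    show "((ys a b) has_real_derivative (Bc*xs a b t)) (at t)" for a b t
    proof -
      have "((ys a b) has_real_derivative (- b * \<omega> * sin (\<omega>*t) + (\<omega>/Ac) * a * \<omega> * cos (\<omega>*t))) (at t)"
        unfolding ys_def[abs_def] by (rule derivative_eq_intros refl)+ (use wp in \<open>simp add: field_simps\<close>)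
      moreover have "- b * \<omega> * sin (\<omega>*t) + (\<omega>/Ac) * a * \<omega> * cos (\<omega>*t) = Bc*xs a b t"
        unfolding xs_def Bce using Ap wp by (simp add: field_simps)
      ultimately show ?thesis by simp
    qed
    show "xs a b 0 = a" "ys a b 0 = b" for a b unfolding xs_def ys_def by simp_all
    show "min_period ell T0" by (rule mp_T0[OF ints])
    show "T = T0" if "min_period ell T" for T using mp_unique[OF ints that] .
    fix \<Psi> :: "real \<Rightarrow> real^2^2"
    assume H: "\<And>t. \<Psi> t$1$1 = xs 1 0 t \<and> \<Psi> t$1$2 = xs 0 (s/Q0) t \<and>
                \<Psi> t$2$1 = Q0/s * ys 1 0 t \<and> \<Psi> t$2$2 = Q0/s * ys 0 (s/Q0) t"
    show "CZ_path \<Psi> T0 = 1"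
    proof (rule ell_rot[OF kp wp T0pos small[folded \<omega>_def]])
      fix t
      have "\<Psi> t $1$2 = - sin (\<omega>*t) / k"
      proof -
        have "\<Psi> t $1$2 = - (Ac/\<omega>) * (s/Q0) * sin (\<omega>*t)" using H[of t] unfolding xs_def by simp
        also have "\<dots> = - sin (\<omega>*t) / k" unfolding k_def using Q0pos sp wp Ap
          by (simp add: field_simps)
        finally show ?thesis .
      qed
      moreover have "\<Psi> t $2$1 = k * sin (\<omega>*t)" using H[of t] unfolding ys_def k_def using sp wp Ap
        by (simp add: field_simps)
      moreover have "\<Psi> t $2$2 = cos (\<omega>*t)" using H[of t] unfolding ys_def using sp Q0pos by simp
      moreover have "\<Psi> t $1$1 = cos (\<omega>*t)" using H[of t] unfolding xs_def by simp
      ultimately show "\<Psi> t $1$1 = cos (\<omega> * t) \<and> \<Psi> t $1$2 = - sin (\<omega> * t) / k \<and>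
              \<Psi> t $2$1 = k * sin (\<omega> * t) \<and> \<Psi> t $2$2 = cos (\<omega> * t)" by simp
    qed
  qed
qed

lemma case_hyp:
  assumes ints: "a0 = of_int ia" "b0 = of_int ib" "coprime ia ib"
    and sg: "\<sigma> = -1" and Ap: "Ac > 0" and Bp: "Bc > 0"
  shows "CZ_orbit_is \<alpha> V1 (V2 p1 p2) P0 0"
proof -
  define \<omega> where "\<omega> = sqrt (Ac*Bc)"
  have wp: "\<omega> > 0" unfolding \<omega>_def using Ap Bp by simp
  have w2: "\<omega> * \<omega> = Ac * Bc" unfolding \<omega>_def using Ap Bp by (simp add: real_sqrt_mult_self)
  have Bce: "Bc = \<omega> * \<omega> / Ac" using w2 Ap by (simp add: field_simps)
  define xs where "xs a b t = a * cosh (\<omega>*t) + (Ac/\<omega>) * b * sinh (\<omega>*t)" for a b t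
  define ys where "ys a b t = b * cosh (\<omega>*t) + (\<omega>/Ac) * a * sinh (\<omega>*t)" for a b t
  define k where "k = Q0 * \<omega> / (s * Ac)"
  have kp: "k > 0" unfolding k_def using Q0pos Ap sp wp by simp
  show ?thesis
  proof (rule CZ_general[where xs=xs and ys=ys])
    show "((xs a b) has_real_derivative (-\<sigma>*Ac*ys a b t)) (at t)" for a b t
    proof -
      have "((xs a b) has_real_derivative (a * \<omega> * sinh (\<omega>*t) + Ac * b * cosh (\<omega>*t))) (at t)"
        unfolding xs_def[abs_def] by (rule derivative_eq_intros refl)+ (use wp in \<open>simp add: field_simps\<close>)
      moreover have "a * \<omega> * sinh (\<omega>*t) + Ac * b * cosh (\<omega>*t) = Ac*ys a b t"
        unfolding ys_def using Ap wp by (simp add: field_simps)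
      moreover have e: "-\<sigma>*Ac*ys a b t = Ac*ys a b t" using sg by simp
      ultimately show ?thesis unfolding e by simp
    qed
    show "((ys a b) has_real_derivative (Bc*xs a b t)) (at t)" for a b t
    proof -
      have "((ys a b) has_real_derivative (b * \<omega> * sinh (\<omega>*t) + (\<omega>/Ac) * a * \<omega> * cosh (\<omega>*t))) (at t)"
        unfolding ys_def[abs_def] by (rule derivative_eq_intros refl)+ (use wp in \<open>simp add: field_simps\<close>)
      moreover have "b * \<omega> * sinh (\<omega>*t) + (\<omega>/Ac) * a * \<omega> * cosh (\<omega>*t) = Bc*xs a b t"
        unfolding xs_def Bce using Ap wp by (simp add: field_simps)
      ultimately show ?thesis by simp
    qed
    show "xs a b 0 = a" "ys a b 0 = b" for a b unfolding xs_def ys_def by simp_all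
    show "min_period ell T0" by (rule mp_T0[OF ints])
    show "T = T0" if "min_period ell T" for T using mp_unique[OF ints that] .
    fix \<Psi> :: "real \<Rightarrow> real^2^2"
    assume H: "\<And>t. \<Psi> t$1$1 = xs 1 0 t \<and> \<Psi> t$1$2 = xs 0 (s/Q0) t \<and>
                \<Psi> t$2$1 = Q0/s * ys 1 0 t \<and> \<Psi> t$2$2 = Q0/s * ys 0 (s/Q0) t"
    show "CZ_path \<Psi> T0 = 0"
    proof (rule hyp_rot[OF kp T0pos])
      fix t
      have "\<Psi> t $1$2 = sinh (\<omega>*t) / k"
      proof -
        have "\<Psi> t $1$2 = (Ac/\<omega>) * (s/Q0) * sinh (\<omega>*t)" using H[of t] unfolding xs_def by simp
        also have "\<dots> = sinh (\<omega>*t) / k" unfolding k_def using Q0pos sp wp Ap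
          by (simp add: field_simps)
        finally show ?thesis .
      qed
      moreover have "\<Psi> t $2$1 = k * sinh (\<omega>*t)" using H[of t] unfolding ys_def k_def using sp wp Ap
        by (simp add: field_simps)
      moreover have "\<Psi> t $2$2 = cosh (\<omega>*t)" using H[of t] unfolding ys_def using sp Q0pos by simp
      moreover have "\<Psi> t $1$1 = cosh (\<omega>*t)" using H[of t] unfolding xs_def by simp
      ultimately show "\<Psi> t $1$1 = cosh (\<omega> * t) \<and> \<Psi> t $1$2 = sinh (\<omega> * t) / k \<and>
              \<Psi> t $2$1 = k * sinh (\<omega> * t) \<and> \<Psi> t $2$2 = cosh (\<omega> * t)" by simp
    qed
  qed
qed


definition Wc where "Wc = deriv p1 x0 * deriv (deriv p2) x0 - deriv (deriv p1) x0 * deriv p2 x0"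

lemma Bc_eq: "Bc = exp (-(e*\<sigma>)) / Q0 * (s * Wc / Q0 + 2 * e * \<sigma> * s)"
proof -
  have "-b0 * deriv (deriv p2) x0 - a0 * deriv (deriv p1) x0 = s * Wc / Q0"
    using Q0pos unfolding a0 b0 Wc_def Q0_def by (simp add: field_simps)
  thus ?thesis unfolding Bc_def by simp
qed

lemma Ac_pos: "e > 0 \<Longrightarrow> Ac > 0" unfolding Ac_def using sp Q0pos by simp

lemma final_hyp:
  assumes ints: "a0 = of_int ia" "b0 = of_int ib" "coprime ia ib"
    and sg: "\<sigma> = -1" and ep: "e > 0" and W: "Wc > 0" and es: "e < Wc / (2*Q0)"
  shows "CZ_orbit_is \<alpha> V1 (V2 p1 p2) P0 0"
proof (rule case_hyp[OF ints sg Ac_pos[OF ep]])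
  have "2 * e * Q0 < Wc" using es Q0pos by (simp add: field_simps)
  hence "s * (2 * e * Q0) < s * Wc" using sp by simp
  hence "s * Wc / Q0 + 2 * e * \<sigma> * s > 0" using sg Q0pos by (simp add: field_simps)
  thus "Bc > 0" unfolding Bc_eq using Q0pos by simp
qed

lemma final_ell:
  assumes ints: "a0 = of_int ia" "b0 = of_int ib" "coprime ia ib"
    and sg: "\<sigma> = 1" and ep: "e > 0" and e1: "e \<le> 1" and W: "Wc > 0"
    and es: "e * s^3 * (s * Wc / Q0 + 2 * s) < Q0^2"
  shows "CZ_orbit_is \<alpha> V1 (V2 p1 p2) P0 1"
proof -
  have K: "s * Wc / Q0 > 0" using sp W Q0pos by simp
  have Bp: "Bc > 0" unfolding Bc_eq using Q0pos sg ep sp K by (simp add: add_pos_pos)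
  have Ap: "Ac > 0" by (rule Ac_pos[OF ep])
  have prod0: "Ac * Bc * T0^2 = 4 * pi^2 * (e * s^3 * (s * Wc / Q0 + 2 * e * \<sigma> * s) / Q0^2)"
    unfolding Ac_def Bc_eq T0_def using Q0pos
    by (simp add: field_simps power2_eq_square power3_eq_cube exp_minus mult_exp_exp)
  have prod: "Ac * Bc * T0^2 = 4 * pi^2 * (e * s^3 * (s * Wc / Q0 + 2 * e * s) / Q0^2)"
    unfolding prod0 using sg by simp
  have "e * s^3 * (s * Wc / Q0 + 2 * e * s) \<le> e * s^3 * (s * Wc / Q0 + 2 * s)"
    using e1 ep sp by (intro mult_left_mono) auto
  hence "e * s^3 * (s * Wc / Q0 + 2 * e * s) < Q0^2" using es by linarith
  hence "e * s^3 * (s * Wc / Q0 + 2 * e * s) / Q0^2 < 1" using Q0pos by simp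
  hence "4 * pi^2 * (e * s^3 * (s * Wc / Q0 + 2 * e * s) / Q0^2) < 4 * pi^2 * 1"
    by (intro mult_strict_left_mono) auto
  hence "Ac * Bc * T0^2 < 4 * pi^2" unfolding prod by simp
  hence "sqrt (Ac * Bc * T0^2) < sqrt ((2*pi)^2)" by (simp add: power_mult_distrib)
  hence "sqrt (Ac * Bc) * T0 < 2 * pi" using T0pos by (simp add: real_sqrt_mult)
  thus ?thesis by (rule case_ell[OF ints sg Ap Bp])
qed

end

lemma smooth_DERIV:
  assumes "smooth_on f I" "x \<in> I"
  shows "DERIV f x :> deriv f x" "DERIV (deriv f) x :> deriv (deriv f) x"
proof -
  have "((deriv ^^ 0) f) field_differentiable (at x)" "((deriv ^^ 1) f) field_differentiable (at x)"
    using assms unfolding smooth_on_def by blast+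
  thus "DERIV f x :> deriv f x" "DERIV (deriv f) x :> deriv (deriv f) x"
    by (simp_all add: DERIV_deriv_iff_field_differentiable)
qed

theorem mainTheorem11:
  fixes p1 p2 :: "real \<Rightarrow> real" and I :: "real set" and L x0 :: real
    and \<beta> :: "real \<Rightarrow> real \<Rightarrow> real"
  assumes contact: "toric_contact p1 p2 I"
    and fin: "finite (centers p1 p2 I L)"
    and bump_smooth: "\<forall>c\<in>centers p1 p2 I L. smooth_on (\<beta> c) UNIV"
    and bump_shape: "\<forall>c\<in>centers p1 p2 I L. \<exists>\<delta>>0. \<forall>x. \<bar>x - c\<bar> < \<delta> \<longrightarrow> \<beta> c x = 1 - (x - c)^2"
    and bump_supp: "\<forall>c\<in>centers p1 p2 I L. closure {x. \<beta> c x \<noteq> 0} \<subseteq> I"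
    and bump_disj: "\<forall>c\<in>centers p1 p2 I L. \<forall>c'\<in>centers p1 p2 I L. c \<noteq> c' \<longrightarrow>
                      closure {x. \<beta> c x \<noteq> 0} \<inter> closure {x. \<beta> c' x \<noteq> 0} = {}"
    and center: "x0 \<in> centers p1 p2 I L"
    and W: "deriv p1 x0 * deriv (deriv p2) x0 - deriv (deriv p1) x0 * deriv p2 x0 > 0"
  shows "\<exists>\<epsilon>0>0. \<forall>\<epsilon>. 0 < \<epsilon> \<and> \<epsilon> < \<epsilon>0 \<longrightarrow>
     (\<forall>q1 q2. let a0 = real_of_int (fst (prim_dir p1 p2 x0));
                  b0 = real_of_int (snd (prim_dir p1 p2 x0));
                  \<theta> = - b0 * q1 + a0 * q2 in
        (\<theta> + 1/2 \<in> \<int> \<longrightarrow>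
           CZ_orbit_is (pert_form p1 p2 (centers p1 p2 I L) \<beta> \<epsilon>) V1 (V2 p1 p2) (vector [x0, q1, q2]) 0) \<and>
        (\<theta> \<in> \<int> \<longrightarrow>
           CZ_orbit_is (pert_form p1 p2 (centers p1 p2 I L) \<beta> \<epsilon>) V1 (V2 p1 p2) (vector [x0, q1, q2]) 1))"
proof -
  define C where "C = centers p1 p2 I L"
  obtain a b where ab: "a < b" "I = {a<..<b}" and sm1: "smooth_on p1 I" and sm2: "smooth_on p2 I"
    and Qp: "\<forall>x\<in>I. Qf p1 p2 x > 0"
    using contact unfolding toric_contact_def by blast
  have x0I: "x0 \<in> I" and "\<exists>T. 0 < T \<and> T < L \<and> T * fst (toric_reeb p1 p2 x0) \<in> \<int> \<and> T * snd (toric_reeb p1 p2 x0) \<in> \<int>"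
    using center unfolding centers_def by auto
  then obtain T where T: "0 < T" "T * fst (toric_reeb p1 p2 x0) \<in> \<int>" "T * snd (toric_reeb p1 p2 x0) \<in> \<int>" by blast
  have Qx0: "Qf p1 p2 x0 > 0" using Qp x0I by blast
  have nz: "fst (toric_reeb p1 p2 x0) \<noteq> 0 \<or> snd (toric_reeb p1 p2 x0) \<noteq> 0"
  proof (rule ccontr)
    assume "\<not> ?thesis"
    hence "deriv p1 x0 = 0" "deriv p2 x0 = 0" using Qx0 unfolding toric_reeb_def by auto
    thus False using Qx0 unfolding Qf_def by simp
  qed
  define ab0 where "ab0 = prim_dir p1 p2 x0"
  have pr: "coprime (fst ab0) (snd ab0) \<and> (\<exists>s>0. real_of_int (fst ab0) = s * fst (toric_reeb p1 p2 x0)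
        \<and> real_of_int (snd ab0) = s * snd (toric_reeb p1 p2 x0))"
    unfolding ab0_def prim_dir_def by (rule prim_the[OF T nz])
  then obtain s where sp: "s > 0" and sa: "real_of_int (fst ab0) = s * fst (toric_reeb p1 p2 x0)"
    and sb: "real_of_int (snd ab0) = s * snd (toric_reeb p1 p2 x0)" by blast
  define ia ib where "ia = fst ab0" "ib = snd ab0"
  define a0 b0 where "a0 = real_of_int ia" "b0 = real_of_int ib"
  have cop: "coprime ia ib" using pr unfolding ia_ib_def by blast
  have a0e: "a0 = s * (deriv p2 x0 / Qf p1 p2 x0)" using sa unfolding a0_b0_def ia_ib_def toric_reeb_def by simp
  have b0e: "b0 = s * (- deriv p1 x0 / Qf p1 p2 x0)" using sb unfolding a0_b0_def ia_ib_def toric_reeb_def by simp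
  define \<delta>1 where "\<delta>1 = min (x0 - a) (b - x0)"
  have d1p: "\<delta>1 > 0" unfolding \<delta>1_def using x0I ab by auto
  have d1I: "\<And>x. \<bar>x - x0\<bar> < \<delta>1 \<Longrightarrow> x \<in> I" unfolding \<delta>1_def ab by auto
  obtain \<delta>2 where d2p: "\<delta>2 > 0" and d2: "\<And>x. \<bar>x - x0\<bar> < \<delta>2 \<Longrightarrow> \<beta> x0 x = 1 - (x - x0)^2"
    using bump_shape center by blast
  have x0supp: "x0 \<in> closure {x. \<beta> x0 x \<noteq> 0}"
  proof -
    have "\<beta> x0 x0 = 1" using d2[of x0] d2p by simp
    hence "x0 \<in> {x. \<beta> x0 x \<noteq> 0}" by simp
    thus ?thesis by (meson closure_subset subsetD)
  qed
  have other: "\<forall>c\<in>C - {x0}. \<exists>d>0. \<forall>y. \<bar>y - x0\<bar> < d \<longrightarrow> \<beta> c y = 0"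
  proof
    fix c assume c: "c \<in> C - {x0}"
    hence cC: "c \<in> centers p1 p2 I L" "c \<noteq> x0" unfolding C_def by auto
    have "closure {x. \<beta> c x \<noteq> 0} \<inter> closure {x. \<beta> x0 x \<noteq> 0} = {}"
      using bump_disj cC center by simp
    hence nx: "x0 \<notin> closure {x. \<beta> c x \<noteq> 0}" using x0supp by blast
    have o: "open (- closure {x. \<beta> c x \<noteq> 0})" by auto
    have x0in: "x0 \<in> - closure {x. \<beta> c x \<noteq> 0}" using nx by simp
    obtain d where d: "d > 0" "\<And>y. dist y x0 < d \<Longrightarrow> y \<in> - closure {x. \<beta> c x \<noteq> 0}"
      using o x0in unfolding open_dist by blast
    have "\<forall>y. \<bar>y - x0\<bar> < d \<longrightarrow> \<beta> c y = 0"
    proof (intro allI impI)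
      fix y assume "\<bar>y - x0\<bar> < d"
      hence "y \<notin> closure {x. \<beta> c x \<noteq> 0}" using d(2)[of y] by (simp add: dist_real_def)
      hence "y \<notin> {x. \<beta> c x \<noteq> 0}" by (meson closure_subset subsetD)
      thus "\<beta> c y = 0" by simp
    qed
    thus "\<exists>d>0. \<forall>y. \<bar>y - x0\<bar> < d \<longrightarrow> \<beta> c y = 0" using d(1) by blast
  qed
  then obtain df where df: "\<And>c. c \<in> C - {x0} \<Longrightarrow> df c > 0 \<and> (\<forall>y. \<bar>y - x0\<bar> < df c \<longrightarrow> \<beta> c y = 0)"
    using bchoice[OF other] by blast
  define D where "D = insert \<delta>1 (insert \<delta>2 (df ` (C - {x0})))"
  have finD: "finite D" unfolding D_def C_def using fin by simp
  define \<delta> where "\<delta> = Min D"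
  have dp: "\<delta> > 0" unfolding \<delta>_def using finD d1p d2p df unfolding D_def by auto
  have dle: "\<delta> \<le> \<delta>1" "\<delta> \<le> \<delta>2" "\<And>c. c \<in> C - {x0} \<Longrightarrow> \<delta> \<le> df c"
    unfolding \<delta>_def by (rule Min_le[OF finD], simp add: D_def)+
  have inI: "\<And>x. \<bar>x - x0\<bar> < \<delta> \<Longrightarrow> x \<in> I" using d1I dle by force
  have pF: "pert_F p1 p2 C \<beta> P = (1 - (P$1 - x0)^2) * cos (2*pi*(-b0*P$2 + a0*P$3))"
    if P: "\<bar>P$1 - x0\<bar> < \<delta>" for P
  proof -
    have x0C: "x0 \<in> C" using center unfolding C_def .
    have finC: "finite C" using fin unfolding C_def .
    have z: "\<beta> c (P$1) = 0" if "c \<in> C - {x0}" for c using df[OF that] dle(3)[OF that] P by force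
    have "pert_F p1 p2 C \<beta> P = \<beta> x0 (P$1) * cos (2 * pi * (- real_of_int (snd (prim_dir p1 p2 x0)) * P$2
                     + real_of_int (fst (prim_dir p1 p2 x0)) * P$3))
         + (\<Sum>c\<in>C - {x0}. \<beta> c (P$1) * cos (2 * pi * (- real_of_int (snd (prim_dir p1 p2 c)) * P$2
                     + real_of_int (fst (prim_dir p1 p2 c)) * P$3)))"
      unfolding pert_F_def using sum.remove[OF finC x0C] by blast
    also have "\<dots> = \<beta> x0 (P$1) * cos (2*pi*(-b0*P$2 + a0*P$3))"
      using z unfolding a0_b0_def ia_ib_def ab0_def by simp
    also have "\<dots> = (1 - (P$1 - x0)^2) * cos (2*pi*(-b0*P$2 + a0*P$3))"
      using d2[of "P$1"] dle(2) P by simp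
    finally show ?thesis .
  qed
  have orbI: "orb p1 p2 x0 a0 b0 s \<epsilon> \<delta> (pert_form p1 p2 C \<beta> \<epsilon>)" for \<epsilon>
  proof
    show "\<delta> > 0" by (rule dp)
    show "Qf p1 p2 x > 0" if "\<bar>x - x0\<bar> < \<delta>" for x using Qp inI[OF that] by blast
    show "DERIV p1 x :> deriv p1 x" if "\<bar>x - x0\<bar> < \<delta>" for x using smooth_DERIV(1)[OF sm1 inI[OF that]] .
    show "DERIV p2 x :> deriv p2 x" if "\<bar>x - x0\<bar> < \<delta>" for x using smooth_DERIV(1)[OF sm2 inI[OF that]] .
    show "DERIV (deriv p1) x0 :> deriv (deriv p1) x0" using smooth_DERIV(2)[OF sm1 x0I] .
    show "DERIV (deriv p2) x0 :> deriv (deriv p2) x0" using smooth_DERIV(2)[OF sm2 x0I] .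
    show "pert_form p1 p2 C \<beta> \<epsilon> P = exp (\<epsilon> * ((1 - (P$1 - x0)^2) * cos (2*pi*(-b0*P$2 + a0*P$3))))
       *\<^sub>R vector[0, p1 (P$1), p2 (P$1)]" if "\<bar>P$1 - x0\<bar> < \<delta>" for P
      unfolding pert_form_def pF[OF that] ..
    show "s > 0" by (rule sp)
    show "a0 = s * (deriv p2 x0 / Qf p1 p2 x0)" by (rule a0e)
    show "b0 = s * (- deriv p1 x0 / Qf p1 p2 x0)" by (rule b0e)
  qed
  define Q0 where "Q0 = Qf p1 p2 x0"
  define Wc where "Wc = deriv p1 x0 * deriv (deriv p2) x0 - deriv (deriv p1) x0 * deriv p2 x0"
  define \<epsilon>0 where "\<epsilon>0 = min 1 (min (Wc / (2*Q0)) (Q0^2 / (s^3 * (s * Wc / Q0 + 2 * s))))"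
  have Wp: "Wc > 0" using W unfolding Wc_def .
  have Q0p: "Q0 > 0" using Qx0 unfolding Q0_def .
  have e0p: "\<epsilon>0 > 0" unfolding \<epsilon>0_def using Wp Q0p sp by (simp add: add_pos_pos)
  have main: "(-b0 * q1 + a0 * q2 + 1/2 \<in> \<int> \<longrightarrow>
           CZ_orbit_is (pert_form p1 p2 C \<beta> \<epsilon>) V1 (V2 p1 p2) (vector [x0, q1, q2]) 0) \<and>
        (-b0 * q1 + a0 * q2 \<in> \<int> \<longrightarrow>
           CZ_orbit_is (pert_form p1 p2 C \<beta> \<epsilon>) V1 (V2 p1 p2) (vector [x0, q1, q2]) 1)"
    if e: "0 < \<epsilon>" "\<epsilon> < \<epsilon>0" for \<epsilon> q1 q2
  proof (intro conjI impI)
    assume h: "-b0 * q1 + a0 * q2 + 1/2 \<in> \<int>"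
    then obtain n :: int where n: "-b0 * q1 + a0 * q2 + 1/2 = of_int n" by (metis Ints_cases)
    have nn: "-b0*q1 + a0*q2 = of_int n - 1/2" using n by linarith
    have th: "2*pi*(-b0*q1 + a0*q2) = 2 * pi * of_int n - pi" unfolding nn by (simp add: algebra_simps)
    have sc: "sin (2*pi*(-b0*q1 + a0*q2)) = 0" "cos (2*pi*(-b0*q1 + a0*q2)) = -1"
      unfolding th sin_diff cos_diff by simp_all
    interpret O: orbit p1 p2 x0 a0 b0 s \<epsilon> \<delta> "pert_form p1 p2 C \<beta> \<epsilon>" q1 q2 "-1"
      by (rule orbit.intro[OF orbI]) (unfold_locales, use sc in auto)
    have "O.Wc = Wc" unfolding O.Wc_def Wc_def ..
    have "O.Q0 = Q0" unfolding O.Q0_def Q0_def ..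
    have "\<epsilon> < Wc / (2*Q0)" using e unfolding \<epsilon>0_def by simp
    hence "CZ_orbit_is (pert_form p1 p2 C \<beta> \<epsilon>) V1 (V2 p1 p2) O.P0 0"
      by (intro O.final_hyp[OF a0_b0_def(1) a0_b0_def(2) cop]) (use e Wp \<open>O.Wc = Wc\<close> \<open>O.Q0 = Q0\<close> in auto)
    thus "CZ_orbit_is (pert_form p1 p2 C \<beta> \<epsilon>) V1 (V2 p1 p2) (vector [x0, q1, q2]) 0" unfolding O.P0_def .
  next
    assume h: "-b0 * q1 + a0 * q2 \<in> \<int>"
    then obtain n :: int where n: "-b0 * q1 + a0 * q2 = of_int n" by (metis Ints_cases)
    have sc: "sin (2*pi*(-b0*q1 + a0*q2)) = 0" "cos (2*pi*(-b0*q1 + a0*q2)) = 1"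
      unfolding n by simp_all
    interpret O: orbit p1 p2 x0 a0 b0 s \<epsilon> \<delta> "pert_form p1 p2 C \<beta> \<epsilon>" q1 q2 1
      by (rule orbit.intro[OF orbI]) (unfold_locales, use sc in auto)
    have "O.Wc = Wc" unfolding O.Wc_def Wc_def ..
    have "O.Q0 = Q0" unfolding O.Q0_def Q0_def ..
    have e1: "\<epsilon> \<le> 1" using e unfolding \<epsilon>0_def by simp
    have "\<epsilon> < Q0^2 / (s^3 * (s * Wc / Q0 + 2 * s))" using e unfolding \<epsilon>0_def by simp
    moreover have "s^3 * (s * Wc / Q0 + 2 * s) > 0" using sp Wp Q0p by (simp add: add_pos_pos)
    ultimately have "\<epsilon> * s^3 * (s * Wc / Q0 + 2 * s) < Q0^2" by (simp add: pos_less_divide_eq mult.assoc)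
    hence "CZ_orbit_is (pert_form p1 p2 C \<beta> \<epsilon>) V1 (V2 p1 p2) O.P0 1"
      by (intro O.final_ell[OF a0_b0_def(1) a0_b0_def(2) cop]) (use e e1 Wp \<open>O.Wc = Wc\<close> \<open>O.Q0 = Q0\<close> in auto)
    thus "CZ_orbit_is (pert_form p1 p2 C \<beta> \<epsilon>) V1 (V2 p1 p2) (vector [x0, q1, q2]) 1" unfolding O.P0_def .
  qed
  have a0d: "real_of_int (fst (prim_dir p1 p2 x0)) = a0" and b0d: "real_of_int (snd (prim_dir p1 p2 x0)) = b0"
    unfolding a0_b0_def ia_ib_def ab0_def by simp_all
  show ?thesis
    unfolding Let_def a0d b0d C_def[symmetric] using e0p main by blast
qed

end
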